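(* Let $A$ and $B$ be $(0,1)$ matrices with $A\neq B$, and let $k=\mathrm{rank}(A-B)$. Then the following are equivalent: (i) $A,B$ are Gram mates and $(A+B)(A-B)^T=0$. (ii) $A,B$ are Gram mates and $(A-B)^T(A+B)=0$. (iii) $B$ is obtained from $A$ by changing the signs of $k$ positive singular values (these $k$ positive singular values being the same as those of $\frac12(A-B)$). (iv) There exist $k$ right singular vectors $\mathbf v_1,\dots,\mathbf v_k$ of $A$ corresponding to positive singular values which form a basis of $\mathrm{Row}(A-B)$ and satisfy $(A+B)\mathbf v_i=0$ for all $i$ (these can be obtained from right singular vectors corresponding to the positive singular values of $\frac12(A-B)$). (v) There exist $k$ left singular vectors $\mathbf u_1,\dots,\mathbf u_k$ of $A$ corresponding to positive singular values which form a basis of $\mathrm{Col}(A-B)$ and satisfy $(A+B)^T\mathbf u_i=0$ for all $i$ (these can be obtained from left singular vectors corresponding to the positive singular values of $\frac12(A-B)$). (vi) $A,B$ are Gram mates and $A(A-B)^T$ is symmetric. (vii) $A,B$ are Gram mates and $A^T(A-B)$ is symmetric.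
   Context: Two $(0,1)$ matrices $A,B$ are Gram mates if $AA^T=BB^T$, $A^TA=B^TB$ and $A\neq B$. For an $m\times n$ real matrix $A$, "$B$ is obtained from $A$ by changing the signs of $k$ positive singular values" means: there are orthogonal $U$, $V$ and a rectangular diagonal $\Sigma$ with nonnegative diagonal entries with $A=U\Sigma V^T$, and a diagonal matrix $S$ with entries $\pm1$, exactly $k$ of them $-1$, each in a position $i$ with $\Sigma_{ii}>0$, such that $B=US\Sigma V^T$. *)

theory Defs
  imports "Jordan_Normal_Form.DL_Rank"
begin

definition zero_one_mat :: "real mat \<Rightarrow> bool" where
  "zero_one_mat A \<longleftrightarrow> (\<forall>i<dim_row A. \<forall>j<dim_col A. A $$ (i,j) = 0 \<or> A $$ (i,j) = 1)"

definition gram_mates :: "real mat \<Rightarrow> real mat \<Rightarrow> bool" where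
  "gram_mates A B \<longleftrightarrow> zero_one_mat A \<and> zero_one_mat B \<and>
     A * A\<^sup>T = B * B\<^sup>T \<and> A\<^sup>T * A = B\<^sup>T * B \<and> A \<noteq> B"

definition orthogonal_real_mat :: "nat \<Rightarrow> real mat \<Rightarrow> bool" where
  "orthogonal_real_mat n U \<longleftrightarrow> U \<in> carrier_mat n n \<and> U\<^sup>T * U = 1\<^sub>m n"

definition rect_diag_nonneg :: "nat \<Rightarrow> nat \<Rightarrow> real mat \<Rightarrow> bool" where
  "rect_diag_nonneg m n \<Sigma> \<longleftrightarrow> \<Sigma> \<in> carrier_mat m n \<and>
     (\<forall>i<m. \<forall>j<n. i \<noteq> j \<longrightarrow> \<Sigma> $$ (i,j) = 0) \<and>
     (\<forall>i<min m n. \<Sigma> $$ (i,i) \<ge> 0)"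

text \<open>B is obtained from the m x n matrix A by changing the signs of k positive singular values.\<close>
definition sign_change_sv :: "nat \<Rightarrow> nat \<Rightarrow> nat \<Rightarrow> real mat \<Rightarrow> real mat \<Rightarrow> bool" where
  "sign_change_sv m n k A B \<longleftrightarrow>
    (\<exists>U V \<Sigma> S. orthogonal_real_mat m U \<and> orthogonal_real_mat n V \<and> rect_diag_nonneg m n \<Sigma> \<and>
       A = U * \<Sigma> * V\<^sup>T \<and>
       S \<in> carrier_mat m m \<and> diagonal_mat S \<and> (\<forall>i<m. S $$ (i,i) = 1 \<or> S $$ (i,i) = -1) \<and>
       card {i. i < m \<and> S $$ (i,i) = -1} = k \<and>
       (\<forall>i<m. S $$ (i,i) = -1 \<longrightarrow> i < n \<and> \<Sigma> $$ (i,i) > 0) \<and>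
       B = U * S * \<Sigma> * V\<^sup>T)"

definition singular_triple :: "nat \<Rightarrow> nat \<Rightarrow> real mat \<Rightarrow> real \<Rightarrow> real vec \<Rightarrow> real vec \<Rightarrow> bool" where
  "singular_triple m n A \<sigma> u v \<longleftrightarrow> \<sigma> \<ge> 0 \<and> u \<in> carrier_vec m \<and> v \<in> carrier_vec n \<and>
     u \<bullet> u = 1 \<and> v \<bullet> v = 1 \<and> A *\<^sub>v v = \<sigma> \<cdot>\<^sub>v u \<and> A\<^sup>T *\<^sub>v u = \<sigma> \<cdot>\<^sub>v v"

definition right_singular_vector :: "nat \<Rightarrow> nat \<Rightarrow> real mat \<Rightarrow> real \<Rightarrow> real vec \<Rightarrow> bool" where
  "right_singular_vector m n A \<sigma> v \<longleftrightarrow> (\<exists>u. singular_triple m n A \<sigma> u v)"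

definition left_singular_vector :: "nat \<Rightarrow> nat \<Rightarrow> real mat \<Rightarrow> real \<Rightarrow> real vec \<Rightarrow> bool" where
  "left_singular_vector m n A \<sigma> u \<longleftrightarrow> (\<exists>v. singular_triple m n A \<sigma> u v)"

context vec_space
begin

definition is_basis_list :: "'a vec list \<Rightarrow> 'a vec set \<Rightarrow> bool" where
  "is_basis_list ws W \<longleftrightarrow> set ws \<subseteq> carrier_vec n \<and> distinct ws \<and>
     lin_indpt (set ws) \<and> span (set ws) = W"

end

end

theory Submission
  imports Defs "Jordan_Normal_Form.Spectral_Radius"
begin

lemma real_self_dot_eq_0: fixes v :: "real vec" assumes "v \<in> carrier_vec n"
  shows "v \<bullet> v = 0 \<longleftrightarrow> v = 0\<^sub>v n"
  using conjugate_square_eq_0_vec[OF assms] by simp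

lemma real_self_dot_gt_0: fixes v :: "real vec" assumes "v \<in> carrier_vec n"
  shows "v \<bullet> v > 0 \<longleftrightarrow> v \<noteq> 0\<^sub>v n"
  using conjugate_square_greater_0_vec[OF assms] by simp

definition orthonormal :: "nat \<Rightarrow> real vec set \<Rightarrow> bool" where
  "orthonormal n S \<longleftrightarrow> S \<subseteq> carrier_vec n \<and> (\<forall>u\<in>S. \<forall>v\<in>S. u \<bullet> v = (if u = v then 1 else 0))"

locale rvs = fixes n :: nat

sublocale rvs \<subseteq> vec_space "TYPE(real)" n .

context rvs begin

lemma lincomb_dot:
  assumes "finite A" "A \<subseteq> carrier_vec n" "w \<in> carrier_vec n"
  shows "lincomb a A \<bullet> w = (\<Sum>u\<in>A. a u * (u \<bullet> w))"
  unfolding lincomb_def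
  by (subst finsum_scalar_prod_sum) (use assms in \<open>auto intro!: sum.cong\<close>)

lemma orthonormal_carrier: "orthonormal n S \<Longrightarrow> S \<subseteq> carrier_vec n"
  unfolding orthonormal_def by auto

lemma orthonormal_indpt: assumes "orthonormal n S" shows "lin_indpt S"
proof
  assume "lin_dep S"
  then obtain A a v where A: "finite A" "A \<subseteq> S" "lincomb a A = 0\<^sub>v n" "v \<in> A" "a v \<noteq> 0"
    unfolding lin_dep_def by auto
  have S: "S \<subseteq> carrier_vec n" using assms orthonormal_def by auto
  have "0 = lincomb a A \<bullet> v" using A S by auto
  also have "\<dots> = (\<Sum>u\<in>A. a u * (u \<bullet> v))" by (rule lincomb_dot) (use A S in auto)
  also have "\<dots> = (\<Sum>u\<in>A. if u = v then a u else 0)"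
  proof (intro sum.cong refl)
    fix u assume "u \<in> A" 
    hence "u \<bullet> v = (if u = v then 1 else 0)" using A assms unfolding orthonormal_def by blast
    thus "a u * (u \<bullet> v) = (if u = v then a u else 0)" by simp
  qed
  also have "\<dots> = a v" using A by simp
  finally show False using A by simp
qed

lemma orthonormal_finite: assumes "orthonormal n S" shows "finite S"
  using li_le_dim(1)[OF fin_dim orthonormal_carrier[OF assms] orthonormal_indpt[OF assms]] by simp

lemma orthonormal_card_le: assumes "orthonormal n S" shows "card S \<le> n"
  using li_le_dim(2)[OF fin_dim orthonormal_carrier[OF assms] orthonormal_indpt[OF assms]] dim_is_n by simp

lemma orthonormal_span: assumes "orthonormal n S" "card S = n" shows "span S = carrier_vec n"
proof -
  have "basis S"
    by (rule dim_li_is_basis[OF fin_dim orthonormal_finite[OF assms(1)] orthonormal_carrier[OF assms(1)]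
        orthonormal_indpt[OF assms(1)]]) (use assms dim_is_n in auto)
  thus ?thesis unfolding basis_def by auto
qed

lemma orthonormal_perp_zero:
  assumes "orthonormal n S" "card S = n" "w \<in> carrier_vec n" "\<forall>t\<in>S. w \<bullet> t = 0"
  shows "w = 0\<^sub>v n"
proof -
  have S: "S \<subseteq> carrier_vec n" using orthonormal_carrier[OF assms(1)] .
  have "w \<in> span S" using orthonormal_span[OF assms(1,2)] assms(3) by auto
  then obtain b B where B: "w = lincomb b B" "finite B" "B \<subseteq> S" using in_spanE by blast
  have "w \<bullet> w = (\<Sum>u\<in>B. b u * (u \<bullet> w))" unfolding B(1) by (rule lincomb_dot) (use B S assms in auto)
  also have "\<dots> = 0"
  proof (intro sum.neutral ballI)
    fix u assume u: "u \<in> B"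
    hence uc: "u \<in> carrier_vec n" using B S by auto
    have "u \<bullet> w = w \<bullet> u" by (rule comm_scalar_prod[OF uc assms(3)])
    also have "\<dots> = 0" using assms(4) u B by auto
    finally show "b u * (u \<bullet> w) = 0" by simp
  qed
  finally show ?thesis using real_self_dot_eq_0[OF assms(3)] by simp
qed

lemma lincomb_coeff_dot:
  assumes "orthonormal n S" "u \<in> S"
  shows "lincomb (\<lambda>v. x \<bullet> v) S \<bullet> u = x \<bullet> u"
proof -
  have S: "S \<subseteq> carrier_vec n" "finite S" using orthonormal_carrier[OF assms(1)] orthonormal_finite[OF assms(1)] by auto
  have "lincomb (\<lambda>v. x \<bullet> v) S \<bullet> u = (\<Sum>v\<in>S. (x \<bullet> v) * (v \<bullet> u))"
    by (rule lincomb_dot) (use S assms in auto)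
  also have "\<dots> = (\<Sum>v\<in>S. if v = u then x \<bullet> u else 0)" using assms
    by (intro sum.cong) (auto simp: orthonormal_def)
  also have "\<dots> = x \<bullet> u" using S assms by simp
  finally show ?thesis .
qed

lemma orthonormal_expand:
  assumes "orthonormal n S" "card S = n" "x \<in> carrier_vec n"
  shows "x = lincomb (\<lambda>v. x \<bullet> v) S"
proof -
  have S: "S \<subseteq> carrier_vec n" "finite S" using orthonormal_carrier[OF assms(1)] orthonormal_finite[OF assms(1)] by auto
  let ?l = "lincomb (\<lambda>v. x \<bullet> v) S"
  have l: "?l \<in> carrier_vec n" using S by (intro lincomb_closed) auto
  have "x - ?l = 0\<^sub>v n"
  proof (rule orthonormal_perp_zero[OF assms(1,2)])
    show "x - ?l \<in> carrier_vec n" using l assms by auto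
    show "\<forall>t\<in>S. (x - ?l) \<bullet> t = 0"
    proof
      fix t assume t: "t \<in> S"
      hence tc: "t \<in> carrier_vec n" using S by auto
      have "(x - ?l) \<bullet> t = x \<bullet> t - ?l \<bullet> t" by (rule minus_scalar_prod_distrib[OF assms(3) l tc])
      thus "(x - ?l) \<bullet> t = 0" using lincomb_coeff_dot[OF assms(1) t] by simp
    qed
  qed
  note h = this
  show ?thesis
  proof (rule eq_vecI)
    fix i assume i: "i < dim_vec ?l"
    then have "(x - ?l) $ i = 0" using h l by simp
    thus "x $ i = ?l $ i" using i l assms(3) by simp
  qed (use l assms(3) in auto)
qed

end

lemma real_sym_has_eigenvalue:
  fixes M :: "real mat" assumes M: "M \<in> carrier_mat r r" "0 < r" "M\<^sup>T = M"
  shows "\<exists>l. eigenvalue M l"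
proof -
  let ?Mc = "map_mat complex_of_real M"
  have Mc: "?Mc \<in> carrier_mat r r" using M by auto
  from spectrum_non_empty[OF Mc M(2)] obtain z where "z \<in> spectrum ?Mc" by auto
  hence "eigenvalue ?Mc z" unfolding spectrum_def by auto
  then obtain w where w: "eigenvector ?Mc w z" unfolding eigenvalue_def by auto
  hence wc: "w \<in> carrier_vec r" "w \<noteq> 0\<^sub>v r" "?Mc *\<^sub>v w = z \<cdot>\<^sub>v w" unfolding eigenvector_def using Mc by auto
  have Msym: "\<And>i j. i < r \<Longrightarrow> j < r \<Longrightarrow> M $$ (i,j) = M $$ (j,i)"
    using M by (metis carrier_matD index_transpose_mat(1))
  define q where "q = (\<Sum>i\<in>{0..<r}. cnj (w$i) * (?Mc *\<^sub>v w)$i)"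
  define s where "s = (\<Sum>i\<in>{0..<r}. cnj (w$i) * w$i)"
  have q1: "q = z * s" unfolding q_def s_def wc(3) using wc(1)
    by (auto simp: sum_distrib_left ac_simps intro!: sum.cong)
  have q2: "q = (\<Sum>i\<in>{0..<r}. \<Sum>j\<in>{0..<r}. cnj (w$i) * of_real (M$$(i,j)) * w$j)"
    unfolding q_def using wc(1) M
    by (auto simp: scalar_prod_def sum_distrib_left ac_simps intro!: sum.cong)
  have "cnj q = (\<Sum>i\<in>{0..<r}. \<Sum>j\<in>{0..<r}. w$i * of_real (M$$(i,j)) * cnj (w$j))"
    unfolding q2 by (simp add: cnj_sum)
  also have "\<dots> = (\<Sum>j\<in>{0..<r}. \<Sum>i\<in>{0..<r}. w$i * of_real (M$$(i,j)) * cnj (w$j))"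
    by (rule sum.swap)
  also have "\<dots> = q" unfolding q2 using Msym
    by (auto simp: ac_simps intro!: sum.cong)
  finally have qr: "q \<in> \<real>" using Reals_cnj_iff by blast
  have sr: "s \<in> \<real>" unfolding s_def
    by (intro sum_in_Reals) (metis Reals_of_real complex_norm_square mult.commute)
  have "w \<bullet>c w \<noteq> 0" using wc(1,2) by simp
  moreover have "w \<bullet>c w = s" unfolding s_def scalar_prod_def using wc(1)
    by (auto simp: ac_simps intro!: sum.cong)
  ultimately have s0: "s \<noteq> 0" by simp
  have "z = q / s" using q1 s0 by simp
  hence zr: "z \<in> \<real>" using qr sr by auto
  define l where "l = Re z"
  have zl: "z = of_real l" unfolding l_def using zr by (simp add: of_real_Re)
  have "poly (char_poly ?Mc) z = 0" using \<open>eigenvalue ?Mc z\<close> eigenvalue_root_char_poly[OF Mc] by simp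
  also have "char_poly ?Mc = map_poly of_real (char_poly M)"
    using of_real_hom.char_poly_hom[OF M(1)] by simp
  finally have "of_real (poly (char_poly M) l) = (0::complex)" unfolding zl of_real_hom.poly_map_poly .
  hence "poly (char_poly M) l = 0" by simp
  thus ?thesis using eigenvalue_root_char_poly[OF M(1)] by blast
qed

context rvs begin

lemma exists_orth_unit:
  assumes "orthonormal n S" "card S < n"
  shows "\<exists>v\<in>carrier_vec n. v \<bullet> v = 1 \<and> (\<forall>u\<in>S. u \<bullet> v = 0)"
proof -
  have S: "S \<subseteq> carrier_vec n" "finite S" using orthonormal_carrier[OF assms(1)] orthonormal_finite[OF assms(1)] by auto
  have "span S \<noteq> carrier_vec n"
  proof
    assume "span S = carrier_vec n"
    hence "card S \<ge> dim" using gen_ge_dim[OF S(2)] S(1) by auto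
    thus False using dim_is_n assms(2) by simp
  qed
  moreover have "span S \<subseteq> carrier_vec n" using span_is_subset2[of S] S by auto
  ultimately obtain x where x: "x \<in> carrier_vec n" "x \<notin> span S" by blast
  let ?l = "lincomb (\<lambda>v. x \<bullet> v) S"
  have l: "?l \<in> carrier_vec n" using S by (intro lincomb_closed) auto
  define y where "y = x - ?l"
  have y: "y \<in> carrier_vec n" unfolding y_def using x l by auto
  have yperp: "\<forall>u\<in>S. u \<bullet> y = 0"
  proof
    fix u assume u: "u \<in> S"
    hence uc: "u \<in> carrier_vec n" using S by auto
    have "u \<bullet> y = y \<bullet> u" by (rule comm_scalar_prod[OF uc y])
    also have "\<dots> = x \<bullet> u - ?l \<bullet> u" unfolding y_def by (rule minus_scalar_prod_distrib[OF x(1) l uc])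
    also have "\<dots> = 0" using lincomb_coeff_dot[OF assms(1) u] by simp
    finally show "u \<bullet> y = 0" .
  qed
  have "y \<noteq> 0\<^sub>v n"
  proof
    assume h: "y = 0\<^sub>v n"
    have "x = ?l"
    proof (rule eq_vecI)
      fix i assume i: "i < dim_vec ?l"
      then have "y $ i = 0" using h l by simp
      thus "x $ i = ?l $ i" using i l x unfolding y_def by simp
    qed (use l x in auto)
    moreover have "?l \<in> span S" using S by (intro in_spanI[OF refl]) auto
    ultimately show False using x by simp
  qed
  then have pos: "y \<bullet> y > 0" using real_self_dot_gt_0[OF y] by simp
  define v where "v = (1 / sqrt (y \<bullet> y)) \<cdot>\<^sub>v y"
  have vc: "v \<in> carrier_vec n" unfolding v_def using y by auto
  have "v \<bullet> v = (1 / sqrt (y \<bullet> y)) * (1 / sqrt (y \<bullet> y)) * (y \<bullet> y)" unfolding v_def using y by simp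
  also have "\<dots> = 1" using pos by (simp add: field_simps)
  finally have "v \<bullet> v = 1" .
  moreover have "\<forall>u\<in>S. u \<bullet> v = 0" unfolding v_def using yperp S y by auto
  ultimately show ?thesis using vc by blast
qed

lemma orthonormal_insert:
  assumes "orthonormal n S" "v \<in> carrier_vec n" "v \<bullet> v = 1" "\<forall>u\<in>S. u \<bullet> v = 0"
  shows "orthonormal n (insert v S)" "v \<notin> S"
proof -
  show "v \<notin> S" using assms by force
  have S: "S \<subseteq> carrier_vec n" using orthonormal_carrier[OF assms(1)] by auto
  have "\<forall>u\<in>S. v \<bullet> u = 0" using assms S comm_scalar_prod[of v n] by (metis subsetD)
  thus "orthonormal n (insert v S)" using assms \<open>v \<notin> S\<close> unfolding orthonormal_def by auto
qed

lemma orthonormal_complete: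
  assumes "orthonormal n S"
  shows "\<exists>T. S \<subseteq> T \<and> orthonormal n T \<and> card T = n"
  using assms
proof (induction "n - card S" arbitrary: S)
  case 0
  then show ?case using orthonormal_card_le[OF 0(2)] by auto
next
  case (Suc k)
  have lt: "card S < n" using Suc(2) by auto
  from exists_orth_unit[OF Suc(3) lt] obtain v where v: "v \<in> carrier_vec n" "v \<bullet> v = 1" "\<forall>u\<in>S. u \<bullet> v = 0" by blast
  note ins = orthonormal_insert[OF Suc(3) v]
  have "card (insert v S) = Suc (card S)" using ins(2) orthonormal_finite[OF Suc(3)] by simp
  hence "k = n - card (insert v S)" using Suc(2) by simp
  from Suc(1)[OF this ins(1)] show ?case by blast
qed

end

lemma vec_eq_of_minus_zero: fixes a b :: "'a :: ab_group_add vec"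
  assumes "a \<in> carrier_vec n" "b \<in> carrier_vec n" "a - b = 0\<^sub>v n" shows "a = b"
proof (rule eq_vecI)
  fix i assume i: "i < dim_vec b"
  have "(a - b) $ i = (0\<^sub>v n) $ i" using assms(3) by (rule arg_cong)
  thus "a $ i = b $ i" using i assms(1,2) by simp
qed (use assms in auto)

lemma moc_T_mult: assumes "set rs \<subseteq> carrier_vec n" "z \<in> carrier_vec n"
  shows "(mat_of_cols n rs)\<^sup>T *\<^sub>v z = vec (length rs) (\<lambda>j. rs ! j \<bullet> z)"
proof (rule eq_vecI)
  fix i assume "i < dim_vec (vec (length rs) (\<lambda>j. rs ! j \<bullet> z))"
  hence i: "i < length rs" by simp
  have "rs ! i \<in> carrier_vec n" using assms(1) nth_mem[OF i] by blast
  thus "((mat_of_cols n rs)\<^sup>T *\<^sub>v z) $ i = vec (length rs) (\<lambda>j. rs ! j \<bullet> z) $ i" using i assms by simp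
qed simp

context rvs begin

lemma spectral_step:
  assumes M: "M \<in> carrier_mat n n" "M\<^sup>T = M"
    and S: "orthonormal n S" "\<forall>s\<in>S. \<exists>l. M *\<^sub>v s = l \<cdot>\<^sub>v s" "card S < n"
  shows "\<exists>v\<in>carrier_vec n. v \<bullet> v = 1 \<and> (\<forall>u\<in>S. u \<bullet> v = 0) \<and> (\<exists>l. M *\<^sub>v v = l \<cdot>\<^sub>v v)"
proof -
  obtain T where T: "S \<subseteq> T" "orthonormal n T" "card T = n" using orthonormal_complete[OF S(1)] by blast
  have Tc: "T \<subseteq> carrier_vec n" "finite T" using orthonormal_carrier[OF T(2)] orthonormal_finite[OF T(2)] by auto
  have Tor: "\<And>u v. u \<in> T \<Longrightarrow> v \<in> T \<Longrightarrow> u \<bullet> v = (if u = v then 1 else 0)" using T(2) unfolding orthonormal_def by auto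
  have Sc: "S \<subseteq> carrier_vec n" using T Tc by auto
  let ?R = "T - S"
  obtain rs where rs: "set rs = ?R" "distinct rs" using finite_distinct_list[of ?R] Tc by auto
  define r where "r = length rs"
  have "card ?R = card T - card S" using T(1) Tc(2) by (simp add: card_Diff_subset finite_subset)
  hence lenr: "r = n - card S" unfolding r_def using rs distinct_card[OF rs(2)] T(3) by simp
  have r0: "0 < r" using lenr S(3) by simp
  have rsc: "set rs \<subseteq> carrier_vec n" using rs Tc by auto
  have rsj: "\<And>j. j < r \<Longrightarrow> rs ! j \<in> T \<and> rs ! j \<notin> S \<and> rs ! j \<in> carrier_vec n"
    using rs rsc unfolding r_def by (metis DiffD1 DiffD2 nth_mem subsetD)
  define Q where "Q = mat_of_cols n rs"
  have Q: "Q \<in> carrier_mat n r" unfolding Q_def r_def by simp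
  have QT: "\<And>z. z \<in> carrier_vec n \<Longrightarrow> Q\<^sup>T *\<^sub>v z = vec r (\<lambda>j. rs ! j \<bullet> z)"
    unfolding Q_def r_def using moc_T_mult[OF rsc] by simp
  have orth_rs: "\<And>i j. i < r \<Longrightarrow> j < r \<Longrightarrow> rs ! i \<bullet> rs ! j = (if i = j then 1 else 0)"
    using Tor rsj rs(2) unfolding r_def by (simp add: nth_eq_iff_index_eq)
  have QTQ: "Q\<^sup>T * Q = 1\<^sub>m r"
  proof (rule eq_matI)
    fix i j assume ij: "i < dim_row (1\<^sub>m r)" "j < dim_col (1\<^sub>m r)"
    hence "(Q\<^sup>T * Q) $$ (i,j) = rs ! i \<bullet> rs ! j" using Q rsj unfolding Q_def r_def by simp
    thus "(Q\<^sup>T * Q) $$ (i,j) = 1\<^sub>m r $$ (i,j)" using orth_rs ij by simp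
  qed (use Q in auto)
  define M' where "M' = Q\<^sup>T * M * Q"
  have M': "M' \<in> carrier_mat r r" unfolding M'_def using Q M by auto
  have QT': "Q\<^sup>T \<in> carrier_mat r n" using Q by auto
  have MQ: "M * Q \<in> carrier_mat n r" using Q M by auto
  have e1: "M' = Q\<^sup>T * (M * Q)" unfolding M'_def using assoc_mult_mat[OF QT' M(1) Q] .
  have "M'\<^sup>T = (M * Q)\<^sup>T * Q\<^sup>T\<^sup>T" unfolding e1 by (rule transpose_mult[OF QT' MQ])
  also have "(M * Q)\<^sup>T = Q\<^sup>T * M\<^sup>T" by (rule transpose_mult[OF M(1) Q])
  finally have M'sym: "M'\<^sup>T = M'" using M unfolding M'_def by simp
  obtain l where "eigenvalue M' l" using real_sym_has_eigenvalue[OF M' r0 M'sym] by blast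
  then obtain y where "eigenvector M' y l" unfolding eigenvalue_def by blast
  hence y: "y \<in> carrier_vec r" "y \<noteq> 0\<^sub>v r" "M' *\<^sub>v y = l \<cdot>\<^sub>v y" unfolding eigenvector_def using M' by auto
  define x where "x = Q *\<^sub>v y"
  have xc: "x \<in> carrier_vec n" unfolding x_def using Q y by auto
  have QTx: "Q\<^sup>T *\<^sub>v x = y" unfolding x_def
    using assoc_mult_mat_vec[of "Q\<^sup>T" r n Q r y, symmetric] Q y QTQ by auto
  have x0: "x \<noteq> 0\<^sub>v n" using QTx y Q by auto
  have QTs: "\<And>s. s \<in> S \<Longrightarrow> Q\<^sup>T *\<^sub>v s = 0\<^sub>v r"
  proof -
    fix s assume s: "s \<in> S"
    show "Q\<^sup>T *\<^sub>v s = 0\<^sub>v r" unfolding QT[OF subsetD[OF Sc s]]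
    proof (rule eq_vecI)
      fix j assume "j < dim_vec (0\<^sub>v r)"
      hence j: "j < r" by simp
      have "rs ! j \<bullet> s = 0" using Tor[of "rs ! j" s] rsj[OF j] s T(1) by auto
      thus "vec r (\<lambda>j. rs ! j \<bullet> s) $ j = 0\<^sub>v r $ j" using j by simp
    qed simp
  qed
  have adj: "\<And>(a :: real vec) t. a \<in> carrier_vec r \<Longrightarrow> t \<in> carrier_vec n \<Longrightarrow> (Q *\<^sub>v a) \<bullet> t = (Q\<^sup>T *\<^sub>v t) \<bullet> a"
  proof -
    fix a t :: "real vec" assume a: "a \<in> carrier_vec r" and t: "t \<in> carrier_vec n"
    have "(Q *\<^sub>v a) \<bullet> t = t \<bullet> (Q *\<^sub>v a)" using comm_scalar_prod[of "Q *\<^sub>v a" n t] Q a t by auto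
    also have "\<dots> = (Q\<^sup>T *\<^sub>v t) \<bullet> a" using transpose_vec_mult_scalar[OF Q a t] by simp
    finally show "(Q *\<^sub>v a) \<bullet> t = (Q\<^sup>T *\<^sub>v t) \<bullet> a" .
  qed
  have xperp: "\<forall>s\<in>S. s \<bullet> x = 0"
  proof
    fix s assume s: "s \<in> S"
    hence sc: "s \<in> carrier_vec n" using Sc by auto
    have "s \<bullet> x = x \<bullet> s" using comm_scalar_prod[OF sc xc] .
    also have "\<dots> = 0" unfolding x_def adj[OF y(1) sc] QTs[OF s] using y by simp
    finally show "s \<bullet> x = 0" .
  qed
  have proj: "\<And>z. z \<in> carrier_vec n \<Longrightarrow> (\<forall>s\<in>S. s \<bullet> z = 0) \<Longrightarrow> Q *\<^sub>v (Q\<^sup>T *\<^sub>v z) = z"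
  proof -
    fix z assume z: "z \<in> carrier_vec n" and zp: "\<forall>s\<in>S. s \<bullet> z = 0"
    let ?p = "Q *\<^sub>v (Q\<^sup>T *\<^sub>v z)"
    have pc: "?p \<in> carrier_vec n" using Q z by auto
    have QTzc: "Q\<^sup>T *\<^sub>v z \<in> carrier_vec r" using Q z by auto
    have "z - ?p = 0\<^sub>v n"
    proof (rule orthonormal_perp_zero[OF T(2,3)])
      show "z - ?p \<in> carrier_vec n" using z pc by auto
      show "\<forall>t\<in>T. (z - ?p) \<bullet> t = 0"
      proof
        fix t assume t: "t \<in> T"
        hence tc: "t \<in> carrier_vec n" using Tc by auto
        have e1: "(z - ?p) \<bullet> t = z \<bullet> t - ?p \<bullet> t" by (rule minus_scalar_prod_distrib[OF z pc tc])
        have e2: "?p \<bullet> t = (Q\<^sup>T *\<^sub>v t) \<bullet> (Q\<^sup>T *\<^sub>v z)" by (rule adj[OF QTzc tc])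
        show "(z - ?p) \<bullet> t = 0"
        proof (cases "t \<in> S")
          case True
          have "z \<bullet> t = 0" using zp True comm_scalar_prod[OF z tc] by simp
          thus ?thesis using e1 e2 QTs[OF True] QTzc by simp
        next
          case False
          hence "t \<in> set rs" using rs t by auto
          then obtain i where i: "i < r" "t = rs ! i" unfolding r_def by (metis in_set_conv_nth)
          have "Q\<^sup>T *\<^sub>v t = unit_vec r i" unfolding QT[OF tc]
            by (rule eq_vecI) (use i orth_rs in auto)
          hence "?p \<bullet> t = (Q\<^sup>T *\<^sub>v z) $ i" using e2 QTzc i by simp
          also have "\<dots> = t \<bullet> z" unfolding QT[OF z] using i by simp
          also have "\<dots> = z \<bullet> t" using comm_scalar_prod[OF tc z] .
          finally show ?thesis using e1 by simp
        qed
      qed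
    qed
    thus "?p = z" using vec_eq_of_minus_zero[OF z pc] by simp
  qed
  have Mxc: "M *\<^sub>v x \<in> carrier_vec n" using M xc by auto
  have Mxperp: "\<forall>s\<in>S. s \<bullet> (M *\<^sub>v x) = 0"
  proof
    fix s assume s: "s \<in> S"
    hence sc: "s \<in> carrier_vec n" using Sc by auto
    obtain ls where ls: "M *\<^sub>v s = ls \<cdot>\<^sub>v s" using S(2) s by blast
    have "s \<bullet> (M *\<^sub>v x) = (M\<^sup>T *\<^sub>v s) \<bullet> x" using transpose_vec_mult_scalar[OF M(1) xc sc] by simp
    also have "\<dots> = ls * (s \<bullet> x)" using M(2) ls sc xc by simp
    also have "\<dots> = 0" using xperp s by simp
    finally show "s \<bullet> (M *\<^sub>v x) = 0" .
  qed
  have "Q\<^sup>T *\<^sub>v (M *\<^sub>v x) = M' *\<^sub>v y"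
    unfolding e1 x_def using assoc_mult_mat_vec[OF QT' MQ y(1)] assoc_mult_mat_vec[OF M(1) Q y(1)] by simp
  hence "M *\<^sub>v x = Q *\<^sub>v (l \<cdot>\<^sub>v y)" using proj[OF Mxc Mxperp] y(3) by simp
  also have "\<dots> = l \<cdot>\<^sub>v x" unfolding x_def using mult_mat_vec[OF Q y(1)] .
  finally have Mx: "M *\<^sub>v x = l \<cdot>\<^sub>v x" .
  have pos: "x \<bullet> x > 0" using real_self_dot_gt_0[OF xc] x0 by simp
  define v where "v = (1 / sqrt (x \<bullet> x)) \<cdot>\<^sub>v x"
  have vc: "v \<in> carrier_vec n" unfolding v_def using xc by auto
  have "v \<bullet> v = (1 / sqrt (x \<bullet> x)) * (1 / sqrt (x \<bullet> x)) * (x \<bullet> x)" unfolding v_def using xc by simp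
  also have "\<dots> = 1" using pos by (simp add: field_simps)
  finally have "v \<bullet> v = 1" .
  moreover have "\<forall>u\<in>S. u \<bullet> v = 0" unfolding v_def using xperp Sc xc by auto
  moreover have "M *\<^sub>v v = l \<cdot>\<^sub>v v" unfolding v_def using mult_mat_vec[OF M(1) xc] Mx
    by (simp add: smult_smult_assoc mult.commute)
  ultimately show ?thesis using vc by blast
qed

lemma spectral_aux:
  assumes M: "M \<in> carrier_mat n n" "M\<^sup>T = M" and k: "k \<le> n"
  shows "\<exists>S. orthonormal n S \<and> card S = k \<and> (\<forall>s\<in>S. \<exists>l. M *\<^sub>v s = l \<cdot>\<^sub>v s)"
  using k
proof (induction k)
  case 0
  show ?case by (rule exI[of _ "{}"]) (auto simp: orthonormal_def)
next
  case (Suc k)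
  then obtain S where S: "orthonormal n S" "card S = k" "\<forall>s\<in>S. \<exists>l. M *\<^sub>v s = l \<cdot>\<^sub>v s" by auto
  from spectral_step[OF M S(1) S(3)] Suc(2) S(2) obtain v where
    v: "v \<in> carrier_vec n" "v \<bullet> v = 1" "\<forall>u\<in>S. u \<bullet> v = 0" "\<exists>l. M *\<^sub>v v = l \<cdot>\<^sub>v v" by auto
  note ins = orthonormal_insert[OF S(1) v(1-3)]
  show ?case
    by (rule exI[of _ "insert v S"]) (use ins S v orthonormal_finite[OF S(1)] in auto)
qed

lemma spectral:
  assumes M: "M \<in> carrier_mat n n" "M\<^sup>T = M"
  shows "\<exists>S. orthonormal n S \<and> card S = n \<and> (\<forall>s\<in>S. \<exists>l. M *\<^sub>v s = l \<cdot>\<^sub>v s)"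
  using spectral_aux[OF M le_refl] .

end

context rvs begin

lemma orthogonal_indpt:
  assumes W: "W \<subseteq> carrier_vec n" "0\<^sub>v n \<notin> W" "\<forall>u\<in>W. \<forall>v\<in>W. u \<noteq> v \<longrightarrow> u \<bullet> v = 0"
  shows "lin_indpt W"
proof
  assume "lin_dep W"
  then obtain A a v where A: "finite A" "A \<subseteq> W" "lincomb a A = 0\<^sub>v n" "v \<in> A" "a v \<noteq> 0"
    unfolding lin_dep_def by auto
  have vc: "v \<in> carrier_vec n" using A W by auto
  have "0 = lincomb a A \<bullet> v" using A W by auto
  also have "\<dots> = (\<Sum>u\<in>A. a u * (u \<bullet> v))" by (rule lincomb_dot) (use A W in auto)
  also have "\<dots> = (\<Sum>u\<in>A. if u = v then a v * (v \<bullet> v) else 0)"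
  proof (intro sum.cong refl)
    fix u assume "u \<in> A"
    thus "a u * (u \<bullet> v) = (if u = v then a v * (v \<bullet> v) else 0)" using A W by auto
  qed
  also have "\<dots> = a v * (v \<bullet> v)" using A by simp
  finally have "a v * (v \<bullet> v) = 0" by simp
  moreover have "v \<bullet> v \<noteq> 0" using real_self_dot_eq_0[OF vc] A W by auto
  ultimately show False using A by simp
qed

lemma orthonormal_subset: "orthonormal n S \<Longrightarrow> T \<subseteq> S \<Longrightarrow> orthonormal n T"
  unfolding orthonormal_def by blast

lemma span_perp:
  assumes S: "orthonormal n S" "card S = n" and T: "T \<subseteq> S" and w: "w \<in> carrier_vec n"
    and perp: "\<forall>p\<in>S - T. w \<bullet> p = 0"
  shows "w \<in> span T"
proof -
  have Sc: "S \<subseteq> carrier_vec n" "finite S" using orthonormal_carrier[OF S(1)] orthonormal_finite[OF S(1)] by auto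
  have TO: "orthonormal n T" using orthonormal_subset[OF S(1) T] .
  have Tc: "T \<subseteq> carrier_vec n" "finite T" using Sc T finite_subset by auto
  let ?l = "lincomb (\<lambda>v. w \<bullet> v) T"
  have l: "?l \<in> carrier_vec n" using Tc by (intro lincomb_closed) auto
  have "w - ?l = 0\<^sub>v n"
  proof (rule orthonormal_perp_zero[OF S])
    show "w - ?l \<in> carrier_vec n" using w l by auto
    show "\<forall>t\<in>S. (w - ?l) \<bullet> t = 0"
    proof
      fix t assume t: "t \<in> S"
      hence tc: "t \<in> carrier_vec n" using Sc by auto
      have e: "(w - ?l) \<bullet> t = w \<bullet> t - ?l \<bullet> t" by (rule minus_scalar_prod_distrib[OF w l tc])
      show "(w - ?l) \<bullet> t = 0"
      proof (cases "t \<in> T")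
        case True
        thus ?thesis using e lincomb_coeff_dot[OF TO True] by simp
      next
        case False
        have "?l \<bullet> t = (\<Sum>v\<in>T. (w \<bullet> v) * (v \<bullet> t))" by (rule lincomb_dot) (use Tc tc in auto)
        also have "\<dots> = 0"
        proof (intro sum.neutral ballI)
          fix v assume v: "v \<in> T"
          hence "v \<bullet> t = 0" using S(1) T t False unfolding orthonormal_def by auto
          thus "(w \<bullet> v) * (v \<bullet> t) = 0" by simp
        qed
        finally show ?thesis using e perp t False by simp
      qed
    qed
  qed
  hence "w = ?l" using vec_eq_of_minus_zero[OF w l] by simp
  moreover have "?l \<in> span T" using Tc by (intro in_spanI[OF refl]) auto
  ultimately show ?thesis by simp
qed

lemma dim_span_indpt:
  assumes "finite X" "X \<subseteq> carrier_vec n" "lin_indpt X"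
  shows "vectorspace.dim class_ring (span_vs X) = card X"
proof -
  have "maximal X (\<lambda>T. T \<subseteq> X \<and> lin_indpt T)"
    using assms unfolding maximal_def by auto
  from dim_span[OF _ assms(1) this] assms(2) show ?thesis by simp
qed

lemma orth_proj_perp:
  assumes W: "finite W" "W \<subseteq> carrier_vec n" "0\<^sub>v n \<notin> W" "\<forall>u\<in>W. \<forall>v\<in>W. u \<noteq> v \<longrightarrow> u \<bullet> v = 0"
    and y: "y \<in> carrier_vec n" and w0: "w0 \<in> W"
  shows "lincomb (\<lambda>w. (y \<bullet> w) / (w \<bullet> w)) W \<bullet> w0 = y \<bullet> w0"
proof -
  have w0c: "w0 \<in> carrier_vec n" using W w0 by auto
  have nz: "w0 \<bullet> w0 \<noteq> 0" using real_self_dot_eq_0[OF w0c] W w0 by auto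
  have "lincomb (\<lambda>w. (y \<bullet> w) / (w \<bullet> w)) W \<bullet> w0 = (\<Sum>u\<in>W. (y \<bullet> u) / (u \<bullet> u) * (u \<bullet> w0))"
    by (rule lincomb_dot) (use W w0c in auto)
  also have "\<dots> = (\<Sum>u\<in>W. if u = w0 then y \<bullet> w0 else 0)"
  proof (intro sum.cong refl)
    fix u assume "u \<in> W"
    thus "(y \<bullet> u) / (u \<bullet> u) * (u \<bullet> w0) = (if u = w0 then y \<bullet> w0 else 0)" using W w0 nz by auto
  qed
  also have "\<dots> = y \<bullet> w0" using W w0 by simp
  finally show ?thesis .
qed

end

abbreviation rspan :: "nat \<Rightarrow> real vec set \<Rightarrow> real vec set" where
  "rspan k S \<equiv> LinearCombinations.module.span class_ring (module_vec TYPE(real) k) S"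

lemma rank_lemma:
  fixes D :: "real mat"
  assumes D: "D \<in> carrier_mat m n" and S: "orthonormal n S" "card S = n"
    and ev: "\<forall>p\<in>S. \<exists>\<nu>. D\<^sup>T *\<^sub>v (D *\<^sub>v p) = \<nu> \<cdot>\<^sub>v p"
  shows "vec_space.row_space n D = rspan n {p\<in>S. D *\<^sub>v p \<noteq> 0\<^sub>v m}"
    "vec_space.rank m D = card {p\<in>S. D *\<^sub>v p \<noteq> 0\<^sub>v m}"
    "vec_space.rank n D\<^sup>T = card {p\<in>S. D *\<^sub>v p \<noteq> 0\<^sub>v m}"
proof -
  interpret M: rvs m .
  interpret N: rvs n .
  let ?T = "{p\<in>S. D *\<^sub>v p \<noteq> 0\<^sub>v m}"
  have Sc: "S \<subseteq> carrier_vec n" "finite S" using N.orthonormal_carrier[OF S(1)] N.orthonormal_finite[OF S(1)] by auto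
  have Tc: "?T \<subseteq> carrier_vec n" "finite ?T" using Sc by auto
  have TO: "orthonormal n ?T" using N.orthonormal_subset[OF S(1)] by auto
  have rs_eq: "N.row_space D = {w \<in> carrier_vec n. \<exists>y\<in>carrier_vec m. D\<^sup>T *\<^sub>v y = w}"
    using N.row_space_eq[OF D] D by simp
  have rows_c: "set (rows D) \<subseteq> carrier_vec n" using D rows_carrier[of D] by auto
  have T_in: "?T \<subseteq> N.row_space D"
  proof
    fix p assume p: "p \<in> ?T"
    hence pc: "p \<in> carrier_vec n" using Sc by auto
    obtain \<nu> where nu: "D\<^sup>T *\<^sub>v (D *\<^sub>v p) = \<nu> \<cdot>\<^sub>v p" using ev p by auto
    have Dpc: "D *\<^sub>v p \<in> carrier_vec m" using D pc by auto
    have "(D *\<^sub>v p) \<bullet> (D *\<^sub>v p) = (D\<^sup>T *\<^sub>v (D *\<^sub>v p)) \<bullet> p"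
      using transpose_vec_mult_scalar[OF D pc Dpc] by simp
    also have "\<dots> = \<nu> * (p \<bullet> p)" using nu pc by simp
    finally have "\<nu> \<noteq> 0" using real_self_dot_eq_0[OF Dpc] p by auto
    have "D\<^sup>T *\<^sub>v ((1 / \<nu>) \<cdot>\<^sub>v (D *\<^sub>v p)) = (1 / \<nu>) \<cdot>\<^sub>v (D\<^sup>T *\<^sub>v (D *\<^sub>v p))"
      using mult_mat_vec[of "D\<^sup>T" n m "D *\<^sub>v p"] D Dpc by auto
    also have "\<dots> = p" unfolding nu using \<open>\<nu> \<noteq> 0\<close> by (simp add: smult_smult_assoc)
    finally show "p \<in> N.row_space D" unfolding rs_eq using pc Dpc by blast
  qed
  have R1: "N.row_space D = N.span ?T"
  proof
    show "N.span ?T \<subseteq> N.row_space D"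
      using N.span_subsetI[OF rows_c, of ?T] T_in unfolding N.row_space_def by blast
    show "N.row_space D \<subseteq> N.span ?T"
    proof
      fix w assume "w \<in> N.row_space D"
      then obtain y where y: "y \<in> carrier_vec m" "w = D\<^sup>T *\<^sub>v y" and wc: "w \<in> carrier_vec n" unfolding rs_eq by auto
      show "w \<in> N.span ?T"
      proof (rule N.span_perp[OF S _ wc])
        show "\<forall>p\<in>S - ?T. w \<bullet> p = 0"
        proof
          fix p assume p: "p \<in> S - ?T"
          hence pc: "p \<in> carrier_vec n" and Dp: "D *\<^sub>v p = 0\<^sub>v m" using Sc by auto
          show "w \<bullet> p = 0" unfolding y(2) transpose_vec_mult_scalar[OF D pc y(1)] Dp using y(1) by simp
        qed
      qed auto
    qed
  qed
  thus "vec_space.row_space n D = rspan n ?T" by simp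
  have "vec_space.rank n D\<^sup>T = vectorspace.dim class_ring (N.span_vs (set (rows D)))"
    unfolding N.rank_def by simp
  also have "N.span (set (rows D)) = N.span ?T" using R1 unfolding N.row_space_def .
  also have "vectorspace.dim class_ring (N.span_vs ?T) = card ?T"
    by (rule N.dim_span_indpt[OF Tc(2) Tc(1) N.orthonormal_indpt[OF TO]])
  finally show "vec_space.rank n D\<^sup>T = card ?T" .
  let ?W = "(\<lambda>p. D *\<^sub>v p) ` ?T"
  have Wc1: "?W \<subseteq> carrier_vec m" using D Tc(1) by (auto intro!: mult_mat_vec_carrier)
  have Wc3: "0\<^sub>v m \<notin> ?W" by (auto simp del: mult_mat_vec_carrier)
  have Wc: "?W \<subseteq> carrier_vec m" "finite ?W" "0\<^sub>v m \<notin> ?W" using Wc1 Wc3 Tc(2) by auto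
  have dotD: "\<And>p q. p \<in> S \<Longrightarrow> q \<in> S \<Longrightarrow> (D *\<^sub>v p) \<bullet> (D *\<^sub>v q) = (if p = q then (D *\<^sub>v p) \<bullet> (D *\<^sub>v p) else 0)"
  proof -
    fix p q assume p: "p \<in> S" and q: "q \<in> S"
    have pc: "p \<in> carrier_vec n" and qc: "q \<in> carrier_vec n" using p q Sc by auto
    obtain \<nu> where nu: "D\<^sup>T *\<^sub>v (D *\<^sub>v p) = \<nu> \<cdot>\<^sub>v p" using ev p by auto
    have "(D *\<^sub>v p) \<bullet> (D *\<^sub>v q) = (D\<^sup>T *\<^sub>v (D *\<^sub>v p)) \<bullet> q"
      using transpose_vec_mult_scalar[OF D qc, of "D *\<^sub>v p"] D pc by simp
    also have "\<dots> = \<nu> * (p \<bullet> q)" using nu pc qc by simp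
    finally show "(D *\<^sub>v p) \<bullet> (D *\<^sub>v q) = (if p = q then (D *\<^sub>v p) \<bullet> (D *\<^sub>v p) else 0)"
      using S(1) p q unfolding orthonormal_def by auto
  qed
  have Worth: "\<forall>u\<in>?W. \<forall>v\<in>?W. u \<noteq> v \<longrightarrow> u \<bullet> v = 0"
  proof (intro ballI impI)
    fix u v assume "u \<in> ?W" "v \<in> ?W" "u \<noteq> v"
    then obtain p q where pq: "p \<in> S" "q \<in> S" "u = D *\<^sub>v p" "v = D *\<^sub>v q" "p \<noteq> q" by auto
    show "u \<bullet> v = 0" using dotD[OF pq(1,2)] pq(3-5) by simp
  qed
  have inj: "inj_on (\<lambda>p. D *\<^sub>v p) ?T"
  proof
    fix p q assume p: "p \<in> ?T" and q: "q \<in> ?T" and e: "D *\<^sub>v p = D *\<^sub>v q"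
    show "p = q"
    proof (rule ccontr)
      assume "p \<noteq> q"
      hence "(D *\<^sub>v p) \<bullet> (D *\<^sub>v p) = 0" using dotD[of p q] p q e by auto
      thus False using real_self_dot_eq_0[of "D *\<^sub>v p" m] p D Sc by auto
    qed
  qed
  have cW: "card ?W = card ?T" using card_image[OF inj] .
  have cs_eq: "M.col_space D = {y \<in> carrier_vec m. \<exists>x\<in>carrier_vec n. D *\<^sub>v x = y}"
    using M.col_space_eq[OF D] D by simp
  have csp: "M.span (set (cols D)) = {y \<in> carrier_vec m. \<exists>x\<in>carrier_vec n. D *\<^sub>v x = y}"
    using cs_eq unfolding M.col_space_def .
  have cols_c: "set (cols D) \<subseteq> carrier_vec m" using D cols_dim[of D] by auto
  have R2: "M.span (set (cols D)) = M.span ?W"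
  proof
    show "M.span ?W \<subseteq> M.span (set (cols D))"
    proof (rule M.span_subsetI[OF cols_c])
      show "?W \<subseteq> M.span (set (cols D))" unfolding csp using Sc D by auto
    qed
    show "M.span (set (cols D)) \<subseteq> M.span ?W"
    proof
      fix y assume "y \<in> M.span (set (cols D))"
      then obtain x where x: "x \<in> carrier_vec n" "y = D *\<^sub>v x" and yc: "y \<in> carrier_vec m"
        unfolding csp by auto
      let ?c = "\<lambda>w. (y \<bullet> w) / (w \<bullet> w)"
      let ?l = "M.lincomb ?c ?W"
      have lspan: "?l \<in> M.span ?W" using Wc by (intro M.in_spanI[OF refl]) auto
      have lc: "?l \<in> carrier_vec m" using Wc by (intro M.lincomb_closed) auto
      have "?l \<in> M.span (set (cols D))" using lspan \<open>M.span ?W \<subseteq> M.span (set (cols D))\<close> by blast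
      then obtain x2 where x2: "x2 \<in> carrier_vec n" "?l = D *\<^sub>v x2" unfolding csp by auto
      define z where "z = y - ?l"
      have zc: "z \<in> carrier_vec m" unfolding z_def using yc lc by auto
      have "z = y - D *\<^sub>v x2" unfolding z_def using x2(2) by simp
      also have "\<dots> = D *\<^sub>v (x - x2)" using x(2) mult_minus_distrib_mat_vec[OF D x(1) x2(1)] by simp
      finally have zD: "z = D *\<^sub>v (x - x2)" .
      have zW: "\<forall>w\<in>?W. z \<bullet> w = 0"
      proof
        fix w assume w: "w \<in> ?W"
        hence wc: "w \<in> carrier_vec m" using Wc by auto
        have "z \<bullet> w = y \<bullet> w - ?l \<bullet> w" unfolding z_def by (rule minus_scalar_prod_distrib[OF yc lc wc])
        thus "z \<bullet> w = 0" using M.orth_proj_perp[OF Wc(2,1,3) Worth yc w] by simp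
      qed
      have DTz: "D\<^sup>T *\<^sub>v z = 0\<^sub>v n"
      proof (rule N.orthonormal_perp_zero[OF S])
        show "D\<^sup>T *\<^sub>v z \<in> carrier_vec n" using D zc by auto
        show "\<forall>t\<in>S. (D\<^sup>T *\<^sub>v z) \<bullet> t = 0"
        proof
          fix t assume t: "t \<in> S"
          hence tc: "t \<in> carrier_vec n" using Sc by auto
          have "(D\<^sup>T *\<^sub>v z) \<bullet> t = z \<bullet> (D *\<^sub>v t)" by (rule transpose_vec_mult_scalar[OF D tc zc])
          also have "\<dots> = 0"
          proof (cases "D *\<^sub>v t = 0\<^sub>v m")
            case True thus ?thesis using zc by simp
          next
            case False thus ?thesis using zW t by auto
          qed
          finally show "(D\<^sup>T *\<^sub>v z) \<bullet> t = 0" .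
        qed
      qed
      have xx: "x - x2 \<in> carrier_vec n" using x x2 by auto
      have "z \<bullet> z = (D\<^sup>T *\<^sub>v z) \<bullet> (x - x2)"
        using transpose_vec_mult_scalar[OF D xx zc] zD by simp
      also have "\<dots> = 0" unfolding DTz using xx by simp
      finally have "z = 0\<^sub>v m" using real_self_dot_eq_0[OF zc] by simp
      hence "y = ?l" using vec_eq_of_minus_zero[OF yc lc] unfolding z_def by simp
      thus "y \<in> M.span ?W" using lspan by simp
    qed
  qed
  have "vec_space.rank m D = vectorspace.dim class_ring (M.span_vs (set (cols D)))"
    unfolding M.rank_def by simp
  also have "M.span (set (cols D)) = M.span ?W" by (rule R2)
  also have "vectorspace.dim class_ring (M.span_vs ?W) = card ?W"
    by (rule M.dim_span_indpt[OF Wc(2) Wc(1) M.orthogonal_indpt[OF Wc(1,3) Worth]])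
  finally show "vec_space.rank m D = card ?T" using cW by simp
qed

lemma entry_prod: fixes A B :: "real mat"
  assumes "A \<in> carrier_mat m n" "B \<in> carrier_mat m n" "i < m" "j < m"
  shows "(A * B\<^sup>T) $$ (i,j) = (\<Sum>k\<in>{0..<n}. A $$ (i,k) * B $$ (j,k))"
  using assms by (simp add: scalar_prod_def)

lemma entry_prodT: fixes A B :: "real mat"
  assumes "A \<in> carrier_mat m n" "B \<in> carrier_mat m n" "i < n" "j < n"
  shows "(A\<^sup>T * B) $$ (i,j) = (\<Sum>k\<in>{0..<m}. A $$ (k,i) * B $$ (k,j))"
  using assms by (simp add: scalar_prod_def)

lemma entry_CDT: fixes A B :: "real mat"
  assumes AB: "A \<in> carrier_mat m n" "B \<in> carrier_mat m n" and ij: "i < m" "j < m"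
  shows "((A + B) * (A - B)\<^sup>T) $$ (i,j) = (A * A\<^sup>T) $$ (i,j) - (A * B\<^sup>T) $$ (i,j) + (A * B\<^sup>T) $$ (j,i) - (B * B\<^sup>T) $$ (i,j)"
proof -
  have C: "A + B \<in> carrier_mat m n" "A - B \<in> carrier_mat m n" using AB by auto
  have "((A + B) * (A - B)\<^sup>T) $$ (i,j) = (\<Sum>k\<in>{0..<n}. (A + B) $$ (i,k) * (A - B) $$ (j,k))"
    by (rule entry_prod[OF C ij])
  also have "\<dots> = (\<Sum>k\<in>{0..<n}. A $$ (i,k) * A $$ (j,k) - A $$ (i,k) * B $$ (j,k) + A $$ (j,k) * B $$ (i,k) - B $$ (i,k) * B $$ (j,k))"
    using AB ij by (intro sum.cong refl) (simp add: algebra_simps)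
  also have "\<dots> = (\<Sum>k\<in>{0..<n}. A $$ (i,k) * A $$ (j,k)) - (\<Sum>k\<in>{0..<n}. A $$ (i,k) * B $$ (j,k)) + (\<Sum>k\<in>{0..<n}. A $$ (j,k) * B $$ (i,k)) - (\<Sum>k\<in>{0..<n}. B $$ (i,k) * B $$ (j,k))"
    by (simp only: sum.distrib sum_subtractf)
  finally show ?thesis
    unfolding entry_prod[OF AB(1) AB(1) ij] entry_prod[OF AB ij]
      entry_prod[OF AB ij(2,1)] entry_prod[OF AB(2) AB(2) ij] .
qed

lemma entry_DTC: fixes A B :: "real mat"
  assumes AB: "A \<in> carrier_mat m n" "B \<in> carrier_mat m n" and ij: "i < n" "j < n"
  shows "((A - B)\<^sup>T * (A + B)) $$ (i,j) = (A\<^sup>T * A) $$ (i,j) + (A\<^sup>T * B) $$ (i,j) - (A\<^sup>T * B) $$ (j,i) - (B\<^sup>T * B) $$ (i,j)"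
proof -
  have C: "A - B \<in> carrier_mat m n" "A + B \<in> carrier_mat m n" using AB by auto
  have "((A - B)\<^sup>T * (A + B)) $$ (i,j) = (\<Sum>k\<in>{0..<m}. (A - B) $$ (k,i) * (A + B) $$ (k,j))"
    by (rule entry_prodT[OF C ij])
  also have "\<dots> = (\<Sum>k\<in>{0..<m}. A $$ (k,i) * A $$ (k,j) + A $$ (k,i) * B $$ (k,j) - A $$ (k,j) * B $$ (k,i) - B $$ (k,i) * B $$ (k,j))"
    using AB ij by (intro sum.cong refl) (simp add: algebra_simps)
  also have "\<dots> = (\<Sum>k\<in>{0..<m}. A $$ (k,i) * A $$ (k,j)) + (\<Sum>k\<in>{0..<m}. A $$ (k,i) * B $$ (k,j)) - (\<Sum>k\<in>{0..<m}. A $$ (k,j) * B $$ (k,i)) - (\<Sum>k\<in>{0..<m}. B $$ (k,i) * B $$ (k,j))"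
    by (simp only: sum.distrib sum_subtractf)
  finally show ?thesis
    unfolding entry_prodT[OF AB(1) AB(1) ij] entry_prodT[OF AB ij]
      entry_prodT[OF AB ij(2,1)] entry_prodT[OF AB(2) AB(2) ij] .
qed

lemma sym_prod: fixes A B :: "real mat"
  assumes "A \<in> carrier_mat m n" "B \<in> carrier_mat m n" "i < m" "j < m"
  shows "(A * B\<^sup>T) $$ (j,i) = (B * A\<^sup>T) $$ (i,j)"
  using assms by (simp add: comm_scalar_prod[of _ n])

lemma sym_prodT: fixes A B :: "real mat"
  assumes "A \<in> carrier_mat m n" "B \<in> carrier_mat m n" "i < n" "j < n"
  shows "(A\<^sup>T * B) $$ (j,i) = (B\<^sup>T * A) $$ (i,j)"
  using assms by (simp add: comm_scalar_prod[of _ m])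

lemma mat_eq_entries: fixes X Y :: "real mat"
  assumes "X \<in> carrier_mat m k" "Y \<in> carrier_mat m k" "\<And>i j. i < m \<Longrightarrow> j < k \<Longrightarrow> X $$ (i,j) = Y $$ (i,j)"
  shows "X = Y"
  using assms by (intro eq_matI) auto

lemma P1_alt: fixes A B :: "real mat"
  assumes AB: "A \<in> carrier_mat m n" "B \<in> carrier_mat m n" and G: "A * A\<^sup>T = B * B\<^sup>T"
  shows "(A + B) * (A - B)\<^sup>T = 0\<^sub>m m m \<longleftrightarrow> A * B\<^sup>T = B * A\<^sup>T"
proof
  assume h: "(A + B) * (A - B)\<^sup>T = 0\<^sub>m m m"
  show "A * B\<^sup>T = B * A\<^sup>T"
  proof (rule mat_eq_entries[of _ m m])
    fix i j assume ij: "i < m" "j < m"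
    have "((A + B) * (A - B)\<^sup>T) $$ (i,j) = 0" using h ij by simp
    thus "(A * B\<^sup>T) $$ (i,j) = (B * A\<^sup>T) $$ (i,j)"
      using entry_CDT[OF AB ij] sym_prod[OF AB ij] G by simp
  qed (use AB in auto)
next
  assume h: "A * B\<^sup>T = B * A\<^sup>T"
  show "(A + B) * (A - B)\<^sup>T = 0\<^sub>m m m"
  proof (rule mat_eq_entries[of _ m m])
    fix i j assume ij: "i < m" "j < m"
    show "((A + B) * (A - B)\<^sup>T) $$ (i,j) = 0\<^sub>m m m $$ (i,j)"
      using entry_CDT[OF AB ij] sym_prod[OF AB ij] G h ij by simp
  qed (use AB in auto)
qed

lemma P2_alt: fixes A B :: "real mat"
  assumes AB: "A \<in> carrier_mat m n" "B \<in> carrier_mat m n" and G: "A\<^sup>T * A = B\<^sup>T * B"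
  shows "(A - B)\<^sup>T * (A + B) = 0\<^sub>m n n \<longleftrightarrow> A\<^sup>T * B = B\<^sup>T * A"
proof
  assume h: "(A - B)\<^sup>T * (A + B) = 0\<^sub>m n n"
  show "A\<^sup>T * B = B\<^sup>T * A"
  proof (rule mat_eq_entries[of _ n n])
    fix i j assume ij: "i < n" "j < n"
    have "((A - B)\<^sup>T * (A + B)) $$ (i,j) = 0" using h ij by simp
    thus "(A\<^sup>T * B) $$ (i,j) = (B\<^sup>T * A) $$ (i,j)"
      using entry_DTC[OF AB ij] sym_prodT[OF AB ij] G by simp
  qed (use AB in auto)
next
  assume h: "A\<^sup>T * B = B\<^sup>T * A"
  show "(A - B)\<^sup>T * (A + B) = 0\<^sub>m n n"
  proof (rule mat_eq_entries[of _ n n])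
    fix i j assume ij: "i < n" "j < n"
    show "((A - B)\<^sup>T * (A + B)) $$ (i,j) = 0\<^sub>m n n $$ (i,j)"
      using entry_DTC[OF AB ij] sym_prodT[OF AB ij] G h ij by simp
  qed (use AB in auto)
qed

lemma P6_alt: fixes A B :: "real mat"
  assumes AB: "A \<in> carrier_mat m n" "B \<in> carrier_mat m n"
  shows "(A * (A - B)\<^sup>T)\<^sup>T = A * (A - B)\<^sup>T \<longleftrightarrow> A * B\<^sup>T = B * A\<^sup>T"
proof -
  have D: "A - B \<in> carrier_mat m n" using AB by auto
  have e: "(A * (A - B)\<^sup>T) $$ (i,j) = (A * A\<^sup>T) $$ (i,j) - (A * B\<^sup>T) $$ (i,j)" if ij: "i < m" "j < m" for i j
  proof -
    have "(A * (A - B)\<^sup>T) $$ (i,j) = (\<Sum>k\<in>{0..<n}. A $$ (i,k) * (A - B) $$ (j,k))"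
      by (rule entry_prod[OF AB(1) D ij])
    also have "\<dots> = (\<Sum>k\<in>{0..<n}. A $$ (i,k) * A $$ (j,k) - A $$ (i,k) * B $$ (j,k))"
      using AB ij by (intro sum.cong refl) (simp add: algebra_simps)
    also have "\<dots> = (\<Sum>k\<in>{0..<n}. A $$ (i,k) * A $$ (j,k)) - (\<Sum>k\<in>{0..<n}. A $$ (i,k) * B $$ (j,k))"
      by (simp only: sum_subtractf)
    finally show ?thesis unfolding entry_prod[OF AB(1) AB(1) ij] entry_prod[OF AB ij] .
  qed
  have sA: "\<And>i j. i < m \<Longrightarrow> j < m \<Longrightarrow> (A * A\<^sup>T) $$ (j,i) = (A * A\<^sup>T) $$ (i,j)"
    using sym_prod[OF AB(1) AB(1)] by simp
  show ?thesis
  proof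
    assume h: "(A * (A - B)\<^sup>T)\<^sup>T = A * (A - B)\<^sup>T"
    show "A * B\<^sup>T = B * A\<^sup>T"
    proof (rule mat_eq_entries[of _ m m])
      fix i j assume ij: "i < m" "j < m"
      have "(A * (A - B)\<^sup>T)\<^sup>T $$ (i,j) = (A * (A - B)\<^sup>T) $$ (i,j)" using h by simp
      hence "(A * (A - B)\<^sup>T) $$ (j,i) = (A * (A - B)\<^sup>T) $$ (i,j)" using ij AB by simp
      thus "(A * B\<^sup>T) $$ (i,j) = (B * A\<^sup>T) $$ (i,j)"
        using e[OF ij] e[OF ij(2,1)] sA[OF ij] sym_prod[OF AB ij] by simp
    qed (use AB in auto)
  next
    assume h: "A * B\<^sup>T = B * A\<^sup>T"
    show "(A * (A - B)\<^sup>T)\<^sup>T = A * (A - B)\<^sup>T"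
    proof (rule mat_eq_entries[of _ m m])
      fix i j assume ij: "i < m" "j < m"
      have "(A * B\<^sup>T) $$ (i,j) = (B * A\<^sup>T) $$ (i,j)" using h by simp
      hence "(A * (A - B)\<^sup>T) $$ (j,i) = (A * (A - B)\<^sup>T) $$ (i,j)"
        using e[OF ij] e[OF ij(2,1)] sA[OF ij] sym_prod[OF AB ij] by simp
      thus "(A * (A - B)\<^sup>T)\<^sup>T $$ (i,j) = (A * (A - B)\<^sup>T) $$ (i,j)" using ij AB by simp
    qed (use AB in auto)
  qed
qed

lemma gram_mates_transpose: "gram_mates A\<^sup>T B\<^sup>T \<longleftrightarrow> gram_mates A B"
  unfolding gram_mates_def zero_one_mat_def by auto

lemma XTX_zero: fixes X :: "real mat"
  assumes X: "X \<in> carrier_mat k k" and h: "X\<^sup>T * X = 0\<^sub>m k k"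
  shows "X = 0\<^sub>m k k"
proof (rule mat_eq_entries[of _ k k])
  fix i j assume ij: "i < k" "j < k"
  have "(\<Sum>l\<in>{0..<k}. X $$ (l,j) * X $$ (l,j)) = 0"
    using entry_prodT[OF X X ij(2) ij(2)] h ij by simp
  hence "\<forall>l\<in>{0..<k}. X $$ (l,j) * X $$ (l,j) = 0"
    using sum_nonneg_eq_0_iff[of "{0..<k}" "\<lambda>l. X $$ (l,j) * X $$ (l,j)"] by simp
  thus "X $$ (i,j) = 0\<^sub>m k k $$ (i,j)" using ij by simp
qed (use X in auto)

lemma key_sym: fixes A B :: "real mat"
  assumes AB: "A \<in> carrier_mat m n" "B \<in> carrier_mat m n"
    and G1: "A * A\<^sup>T = B * B\<^sup>T" and G2: "A\<^sup>T * A = B\<^sup>T * B" and h: "A * B\<^sup>T = B * A\<^sup>T"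
  shows "A\<^sup>T * B = B\<^sup>T * A"
proof -
  have C: "A + B \<in> carrier_mat m n" and D: "A - B \<in> carrier_mat m n" and DT: "(A - B)\<^sup>T \<in> carrier_mat n m"
    using AB by auto
  have CDT: "(A + B) * (A - B)\<^sup>T = 0\<^sub>m m m" using P1_alt[OF AB G1] h by simp
  define X where "X = (A - B)\<^sup>T * (A + B)"
  have Xc: "X \<in> carrier_mat n n" unfolding X_def using AB by auto
  have DTC: "(A - B)\<^sup>T * (A + B) \<in> carrier_mat n n" using DT C by auto
  have "X * X = (A - B)\<^sup>T * ((A + B) * ((A - B)\<^sup>T * (A + B)))"
    unfolding X_def by (rule assoc_mult_mat[OF DT C DTC])
  also have "(A + B) * ((A - B)\<^sup>T * (A + B)) = ((A + B) * (A - B)\<^sup>T) * (A + B)"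
    by (rule assoc_mult_mat[OF C DT C, symmetric])
  finally have XX0: "X * X = (A - B)\<^sup>T * (((A + B) * (A - B)\<^sup>T) * (A + B))" .
  have XX: "X * X = 0\<^sub>m n n" unfolding XX0 CDT left_mult_zero_mat[OF C] right_mult_zero_mat[OF DT] ..
  have Xe: "X $$ (i,j) = (A\<^sup>T * B) $$ (i,j) - (B\<^sup>T * A) $$ (i,j)" if ij: "i < n" "j < n" for i j
  proof -
    have g: "(A\<^sup>T * A) $$ (i,j) = (B\<^sup>T * B) $$ (i,j)" using G2 by simp
    show ?thesis unfolding X_def entry_DTC[OF AB ij] sym_prodT[OF AB ij] g by simp
  qed
  have skew: "X $$ (j,i) = - X $$ (i,j)" if ij: "i < n" "j < n" for i j
    unfolding Xe[OF ij] Xe[OF ij(2,1)] sym_prodT[OF AB ij] sym_prodT[OF AB(2,1) ij] by simp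
  have "X\<^sup>T * X = 0\<^sub>m n n"
  proof (rule mat_eq_entries[of _ n n])
    fix i j assume ij: "i < n" "j < n"
    have "(X\<^sup>T * X) $$ (i,j) = (\<Sum>l\<in>{0..<n}. X $$ (l,i) * X $$ (l,j))" using entry_prodT[OF Xc Xc ij] .
    also have "\<dots> = (\<Sum>l\<in>{0..<n}. - (X $$ (i,l) * X $$ (l,j)))"
    proof (intro sum.cong refl)
      fix l assume "l \<in> {0..<n}"
      hence l: "l < n" by simp
      show "X $$ (l,i) * X $$ (l,j) = - (X $$ (i,l) * X $$ (l,j))" unfolding skew[OF ij(1) l] by simp
    qed
    also have "\<dots> = - (\<Sum>l\<in>{0..<n}. X $$ (i,l) * X $$ (l,j))" by (rule sum_negf)
    also have "(\<Sum>l\<in>{0..<n}. X $$ (i,l) * X $$ (l,j)) = (X * X) $$ (i,j)"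
      using Xc ij by (simp add: scalar_prod_def)
    finally show "(X\<^sup>T * X) $$ (i,j) = 0\<^sub>m n n $$ (i,j)" using XX ij by simp
  qed (use Xc in auto)
  hence "X = 0\<^sub>m n n" using XTX_zero[OF Xc] by simp
  thus ?thesis using P2_alt[OF AB G2] unfolding X_def by simp
qed

lemma mat_vec_scale: fixes X Y :: "real mat"
  assumes X: "X \<in> carrier_mat k l" and Y: "Y \<in> carrier_mat k l" and x: "x \<in> carrier_vec l"
    and e: "\<And>i j. i < k \<Longrightarrow> j < l \<Longrightarrow> X $$ (i,j) = c * Y $$ (i,j)"
  shows "X *\<^sub>v x = c \<cdot>\<^sub>v (Y *\<^sub>v x)"
proof (rule eq_vecI)
  fix i assume "i < dim_vec (c \<cdot>\<^sub>v (Y *\<^sub>v x))"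
  hence i: "i < k" using Y by simp
  have "(X *\<^sub>v x) $ i = (\<Sum>j\<in>{0..<l}. X $$ (i,j) * x $ j)" using X x i by (simp add: scalar_prod_def)
  also have "\<dots> = (\<Sum>j\<in>{0..<l}. c * (Y $$ (i,j) * x $ j))" using e i by (intro sum.cong) auto
  also have "\<dots> = c * (\<Sum>j\<in>{0..<l}. Y $$ (i,j) * x $ j)" by (simp add: sum_distrib_left)
  also have "\<dots> = (c \<cdot>\<^sub>v (Y *\<^sub>v x)) $ i" using Y x i by (simp add: scalar_prod_def)
  finally show "(X *\<^sub>v x) $ i = (c \<cdot>\<^sub>v (Y *\<^sub>v x)) $ i" .
qed (use X Y in auto)

lemma zero_mat_mult_vec[simp]: fixes y :: "'a :: comm_ring_1 vec"
  shows "y \<in> carrier_vec k \<Longrightarrow> 0\<^sub>m j k *\<^sub>v y = 0\<^sub>v j"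
  by (intro eq_vecI) (auto simp: scalar_prod_def)

lemma mat_mult_zero_vec[simp]: fixes A :: "'a :: comm_ring_1 mat"
  shows "A \<in> carrier_mat j k \<Longrightarrow> A *\<^sub>v 0\<^sub>v k = 0\<^sub>v j"
  by (intro eq_vecI) (auto simp: scalar_prod_def)

lemma quad_eq: fixes X :: "real mat"
  assumes X: "X \<in> carrier_mat k l" and y: "y \<in> carrier_vec k"
  shows "(X\<^sup>T *\<^sub>v y) \<bullet> (X\<^sup>T *\<^sub>v y) = y \<bullet> (X *\<^sub>v (X\<^sup>T *\<^sub>v y))"
  using transpose_vec_mult_scalar[OF X _ y, of "X\<^sup>T *\<^sub>v y"] X y by auto

lemma struct_lemma:
  fixes A B :: "real mat"
  assumes AB: "A \<in> carrier_mat m n" "B \<in> carrier_mat m n"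
    and G2: "A\<^sup>T * A = B\<^sup>T * B" and CDT: "(A + B) * (A - B)\<^sup>T = 0\<^sub>m m m"
  shows "\<exists>S. orthonormal n S \<and> card S = n \<and> (\<forall>p\<in>S.
      (\<exists>\<mu>. A\<^sup>T *\<^sub>v (A *\<^sub>v p) = \<mu> \<cdot>\<^sub>v p) \<and> (\<exists>\<nu>. (A - B)\<^sup>T *\<^sub>v ((A - B) *\<^sub>v p) = \<nu> \<cdot>\<^sub>v p) \<and>
      ((A + B) *\<^sub>v p = 0\<^sub>v m \<or> (A - B) *\<^sub>v p = 0\<^sub>v m))"
proof -
  define C where "C = A + B"
  define D where "D = A - B"
  have C: "C \<in> carrier_mat m n" and D: "D \<in> carrier_mat m n" unfolding C_def D_def using AB by auto
  have CT: "C\<^sup>T \<in> carrier_mat n m" and DT: "D\<^sup>T \<in> carrier_mat n m" using C D by auto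
  define N where "N = C\<^sup>T * C - D\<^sup>T * D"
  have N: "N \<in> carrier_mat n n" unfolding N_def using C D by auto
  have "N\<^sup>T = (C\<^sup>T * C)\<^sup>T - (D\<^sup>T * D)\<^sup>T" unfolding N_def
    by (rule transpose_minus) (use C D in auto)
  also have "(C\<^sup>T * C)\<^sup>T = C\<^sup>T * C" using transpose_mult[OF CT C] by simp
  also have "(D\<^sup>T * D)\<^sup>T = D\<^sup>T * D" using transpose_mult[OF DT D] by simp
  finally have Nsym: "N\<^sup>T = N" unfolding N_def .
  interpret NS: rvs n .
  obtain S where S: "orthonormal n S" "card S = n" "\<forall>s\<in>S. \<exists>l. N *\<^sub>v s = l \<cdot>\<^sub>v s"
    using NS.spectral[OF N Nsym] by blast
  have Sc: "S \<subseteq> carrier_vec n" using S(1) unfolding orthonormal_def by auto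
  have V2: "\<And>y. y \<in> carrier_vec m \<Longrightarrow> C *\<^sub>v (D\<^sup>T *\<^sub>v y) = 0\<^sub>v m"
  proof -
    fix y :: "real vec" assume y: "y \<in> carrier_vec m"
    have "C *\<^sub>v (D\<^sup>T *\<^sub>v y) = (C * D\<^sup>T) *\<^sub>v y" using assoc_mult_mat_vec[OF C DT y] by simp
    also have "C * D\<^sup>T = 0\<^sub>m m m" using CDT unfolding C_def D_def .
    finally show "C *\<^sub>v (D\<^sup>T *\<^sub>v y) = 0\<^sub>v m" using y by simp
  qed
  have DCT: "D * C\<^sup>T = 0\<^sub>m m m"
  proof -
    have "(C * D\<^sup>T)\<^sup>T = D\<^sup>T\<^sup>T * C\<^sup>T" by (rule transpose_mult[OF C DT])
    thus ?thesis using CDT unfolding C_def D_def by simp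
  qed
  have V3: "\<And>y. y \<in> carrier_vec m \<Longrightarrow> D *\<^sub>v (C\<^sup>T *\<^sub>v y) = 0\<^sub>v m"
  proof -
    fix y :: "real vec" assume y: "y \<in> carrier_vec m"
    have "D *\<^sub>v (C\<^sup>T *\<^sub>v y) = (D * C\<^sup>T) *\<^sub>v y" using assoc_mult_mat_vec[OF D CT y] by simp
    thus "D *\<^sub>v (C\<^sup>T *\<^sub>v y) = 0\<^sub>v m" using DCT y by simp
  qed
  have ATA: "A\<^sup>T *\<^sub>v (A *\<^sub>v x) = (1/4) \<cdot>\<^sub>v (C\<^sup>T *\<^sub>v (C *\<^sub>v x) + D\<^sup>T *\<^sub>v (D *\<^sub>v x))"
    if x: "x \<in> carrier_vec n" for x
  proof -
    have CC: "C\<^sup>T * C + D\<^sup>T * D \<in> carrier_mat n n" using C D by auto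
    have AA: "A\<^sup>T * A \<in> carrier_mat n n" using AB by auto
    have e: "(A\<^sup>T * A) $$ (i,j) = (1/4) * (C\<^sup>T * C + D\<^sup>T * D) $$ (i,j)" if ij: "i < n" "j < n" for i j
    proof -
      have g: "(\<Sum>k\<in>{0..<m}. A $$ (k,i) * A $$ (k,j)) = (\<Sum>k\<in>{0..<m}. B $$ (k,i) * B $$ (k,j))"
        using arg_cong[OF G2, of "\<lambda>X. X $$ (i,j)"] unfolding entry_prodT[OF AB(1) AB(1) ij] entry_prodT[OF AB(2) AB(2) ij] .
      have "(C\<^sup>T * C + D\<^sup>T * D) $$ (i,j) = (C\<^sup>T * C) $$ (i,j) + (D\<^sup>T * D) $$ (i,j)" using C D ij by simp
      also have "\<dots> = (\<Sum>k\<in>{0..<m}. C $$ (k,i) * C $$ (k,j)) + (\<Sum>k\<in>{0..<m}. D $$ (k,i) * D $$ (k,j))"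
        unfolding entry_prodT[OF C C ij] entry_prodT[OF D D ij] ..
      also have "\<dots> = (\<Sum>k\<in>{0..<m}. 2 * (A $$ (k,i) * A $$ (k,j)) + 2 * (B $$ (k,i) * B $$ (k,j)))"
        unfolding sum.distrib[symmetric] using AB ij unfolding C_def D_def
        by (intro sum.cong refl) (simp add: algebra_simps)
      also have "\<dots> = 2 * (\<Sum>k\<in>{0..<m}. A $$ (k,i) * A $$ (k,j)) + 2 * (\<Sum>k\<in>{0..<m}. B $$ (k,i) * B $$ (k,j))"
        by (simp only: sum.distrib sum_distrib_left)
      also have "\<dots> = 4 * (A\<^sup>T * A) $$ (i,j)" unfolding entry_prodT[OF AB(1) AB(1) ij] g by simp
      finally show ?thesis by simp
    qed
    have "A\<^sup>T *\<^sub>v (A *\<^sub>v x) = (A\<^sup>T * A) *\<^sub>v x" using assoc_mult_mat_vec[of "A\<^sup>T" n m A n x] AB x by simp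
    also have "\<dots> = (1/4) \<cdot>\<^sub>v ((C\<^sup>T * C + D\<^sup>T * D) *\<^sub>v x)" by (rule mat_vec_scale[OF AA CC x e])
    also have "(C\<^sup>T * C + D\<^sup>T * D) *\<^sub>v x = C\<^sup>T *\<^sub>v (C *\<^sub>v x) + D\<^sup>T *\<^sub>v (D *\<^sub>v x)"
      using add_mult_distrib_mat_vec[of "C\<^sup>T * C" n n "D\<^sup>T * D" x] C D x by simp
    finally show ?thesis .
  qed
  have main: "(\<exists>\<mu>. A\<^sup>T *\<^sub>v (A *\<^sub>v p) = \<mu> \<cdot>\<^sub>v p) \<and> (\<exists>\<nu>. D\<^sup>T *\<^sub>v (D *\<^sub>v p) = \<nu> \<cdot>\<^sub>v p) \<and>
      (C *\<^sub>v p = 0\<^sub>v m \<or> D *\<^sub>v p = 0\<^sub>v m)" if p: "p \<in> S" for p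
  proof -
    have pc: "p \<in> carrier_vec n" using p Sc by auto
    obtain l where l: "N *\<^sub>v p = l \<cdot>\<^sub>v p" using S(3) p by blast
    define c where "c = C *\<^sub>v p"
    define d where "d = D *\<^sub>v p"
    have cc: "c \<in> carrier_vec m" and dc: "d \<in> carrier_vec m" unfolding c_def d_def using C D pc by auto
    have CTc: "C\<^sup>T *\<^sub>v c \<in> carrier_vec n" and DTd: "D\<^sup>T *\<^sub>v d \<in> carrier_vec n" using C D cc dc by auto
    have V1: "C\<^sup>T *\<^sub>v c - D\<^sup>T *\<^sub>v d = l \<cdot>\<^sub>v p"
    proof -
      have "N *\<^sub>v p = (C\<^sup>T * C) *\<^sub>v p - (D\<^sup>T * D) *\<^sub>v p" unfolding N_def
        by (rule minus_mult_distrib_mat_vec) (use C D pc in auto)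
      also have "(C\<^sup>T * C) *\<^sub>v p = C\<^sup>T *\<^sub>v c" unfolding c_def using assoc_mult_mat_vec[OF CT C pc] .
      also have "(D\<^sup>T * D) *\<^sub>v p = D\<^sup>T *\<^sub>v d" unfolding d_def using assoc_mult_mat_vec[OF DT D pc] .
      finally show ?thesis using l by simp
    qed
    have Cl: "C *\<^sub>v (C\<^sup>T *\<^sub>v c) = l \<cdot>\<^sub>v c"
    proof -
      have "C *\<^sub>v (C\<^sup>T *\<^sub>v c - D\<^sup>T *\<^sub>v d) = C *\<^sub>v (C\<^sup>T *\<^sub>v c) - C *\<^sub>v (D\<^sup>T *\<^sub>v d)"
        by (rule mult_minus_distrib_mat_vec[OF C CTc DTd])
      also have "C *\<^sub>v (D\<^sup>T *\<^sub>v d) = 0\<^sub>v m" using V2[OF dc] .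
      finally have "C *\<^sub>v (C\<^sup>T *\<^sub>v c) - 0\<^sub>v m = C *\<^sub>v (l \<cdot>\<^sub>v p)" unfolding V1 by simp
      also have "\<dots> = l \<cdot>\<^sub>v c" unfolding c_def by (rule mult_mat_vec[OF C pc])
      finally show ?thesis using C CTc by simp
    qed
    have Dl: "D *\<^sub>v (D\<^sup>T *\<^sub>v d) = (- l) \<cdot>\<^sub>v d"
    proof -
      have "D *\<^sub>v (C\<^sup>T *\<^sub>v c - D\<^sup>T *\<^sub>v d) = D *\<^sub>v (C\<^sup>T *\<^sub>v c) - D *\<^sub>v (D\<^sup>T *\<^sub>v d)"
        by (rule mult_minus_distrib_mat_vec[OF D CTc DTd])
      also have "D *\<^sub>v (C\<^sup>T *\<^sub>v c) = 0\<^sub>v m" using V3[OF cc] .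
      finally have e: "0\<^sub>v m - D *\<^sub>v (D\<^sup>T *\<^sub>v d) = D *\<^sub>v (l \<cdot>\<^sub>v p)" unfolding V1 by simp
      have "D *\<^sub>v (l \<cdot>\<^sub>v p) = l \<cdot>\<^sub>v d" unfolding d_def by (rule mult_mat_vec[OF D pc])
      with e have e2: "0\<^sub>v m - D *\<^sub>v (D\<^sup>T *\<^sub>v d) = l \<cdot>\<^sub>v d" by simp
      show ?thesis
      proof (rule eq_vecI)
        fix i assume "i < dim_vec ((- l) \<cdot>\<^sub>v d)"
        hence i: "i < m" using dc by simp
        have "(0\<^sub>v m - D *\<^sub>v (D\<^sup>T *\<^sub>v d)) $ i = (l \<cdot>\<^sub>v d) $ i" using e2 by simp
        thus "(D *\<^sub>v (D\<^sup>T *\<^sub>v d)) $ i = ((- l) \<cdot>\<^sub>v d) $ i" using i D DT dc by simp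
      qed (use D dc in auto)
    qed
    have qc: "(C\<^sup>T *\<^sub>v c) \<bullet> (C\<^sup>T *\<^sub>v c) = l * (c \<bullet> c)"
      unfolding quad_eq[OF C cc] Cl using cc by simp
    have qd: "(D\<^sup>T *\<^sub>v d) \<bullet> (D\<^sup>T *\<^sub>v d) = - l * (d \<bullet> d)"
      unfolding quad_eq[OF D dc] Dl using dc by simp
    have nn1: "(C\<^sup>T *\<^sub>v c) \<bullet> (C\<^sup>T *\<^sub>v c) \<ge> 0" "c \<bullet> c \<ge> 0" "(D\<^sup>T *\<^sub>v d) \<bullet> (D\<^sup>T *\<^sub>v d) \<ge> 0" "d \<bullet> d \<ge> 0"
      using real_self_dot_gt_0[OF CTc] real_self_dot_eq_0[OF CTc] real_self_dot_gt_0[OF cc] real_self_dot_eq_0[OF cc]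
        real_self_dot_gt_0[OF DTd] real_self_dot_eq_0[OF DTd] real_self_dot_gt_0[OF dc] real_self_dot_eq_0[OF dc]
      by (metis linorder_not_le order_less_imp_le)+
    have cd: "c = 0\<^sub>v m \<or> d = 0\<^sub>v m"
    proof (cases "l > 0")
      case True
      have "d \<bullet> d \<le> 0" using qd nn1 True by (metis mult_minus_left neg_0_le_iff_le zero_le_mult_iff linorder_not_le)
      hence "d \<bullet> d = 0" using nn1 by simp
      thus ?thesis using real_self_dot_eq_0[OF dc] by simp
    next
      case False
      show ?thesis
      proof (cases "l < 0")
        case True
        have "c \<bullet> c \<le> 0" using qc nn1 True by (metis zero_le_mult_iff linorder_not_le)
        hence "c \<bullet> c = 0" using nn1 by simp
        thus ?thesis using real_self_dot_eq_0[OF cc] by simp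
      next
        case False
        with \<open>\<not> l > 0\<close> have l0: "l = 0" by simp
        hence "(C\<^sup>T *\<^sub>v c) \<bullet> (C\<^sup>T *\<^sub>v c) = 0" using qc by simp
        hence z: "C\<^sup>T *\<^sub>v c = 0\<^sub>v n" using real_self_dot_eq_0[OF CTc] by simp
        have "c \<bullet> c = (C\<^sup>T *\<^sub>v c) \<bullet> p" unfolding c_def using transpose_vec_mult_scalar[OF C pc cc] c_def by simp
        also have "\<dots> = 0" unfolding z using pc by simp
        finally show ?thesis using real_self_dot_eq_0[OF cc] by simp
      qed
    qed
    have ev_d: "\<exists>\<nu>. D\<^sup>T *\<^sub>v d = \<nu> \<cdot>\<^sub>v p"
    proof (cases "d = 0\<^sub>v m")
      case True
      thus ?thesis using DT pc by (intro exI[of _ 0]) auto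
    next
      case False
      hence c0: "c = 0\<^sub>v m" using cd by simp
      have "C\<^sup>T *\<^sub>v c = 0\<^sub>v n" unfolding c0 using CT by simp
      hence h: "0\<^sub>v n - D\<^sup>T *\<^sub>v d = l \<cdot>\<^sub>v p" using V1 by simp
      have "D\<^sup>T *\<^sub>v d = (- l) \<cdot>\<^sub>v p"
      proof (rule eq_vecI)
        fix i assume "i < dim_vec ((- l) \<cdot>\<^sub>v p)"
        hence i: "i < n" using pc by simp
        have "(0\<^sub>v n - D\<^sup>T *\<^sub>v d) $ i = (l \<cdot>\<^sub>v p) $ i" using h by simp
        thus "(D\<^sup>T *\<^sub>v d) $ i = ((- l) \<cdot>\<^sub>v p) $ i" using i DTd pc D by simp
      qed (use DTd pc D in auto)
      thus ?thesis by blast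
    qed
    have ev_a: "\<exists>\<mu>. A\<^sup>T *\<^sub>v (A *\<^sub>v p) = \<mu> \<cdot>\<^sub>v p"
    proof -
      obtain \<nu> where nu: "D\<^sup>T *\<^sub>v d = \<nu> \<cdot>\<^sub>v p" using ev_d by blast
      have "C\<^sup>T *\<^sub>v c = l \<cdot>\<^sub>v p + \<nu> \<cdot>\<^sub>v p"
      proof (rule eq_vecI)
        fix i assume "i < dim_vec (l \<cdot>\<^sub>v p + \<nu> \<cdot>\<^sub>v p)"
        hence i: "i < n" using pc by simp
        have "(C\<^sup>T *\<^sub>v c - D\<^sup>T *\<^sub>v d) $ i = (l \<cdot>\<^sub>v p) $ i" using V1 by simp
        moreover have "(D\<^sup>T *\<^sub>v d) $ i = (\<nu> \<cdot>\<^sub>v p) $ i" using nu by simp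
        ultimately show "(C\<^sup>T *\<^sub>v c) $ i = (l \<cdot>\<^sub>v p + \<nu> \<cdot>\<^sub>v p) $ i" using i CTc DTd pc C D by simp
      qed (use CTc pc C in auto)
      hence "A\<^sup>T *\<^sub>v (A *\<^sub>v p) = (1/4) \<cdot>\<^sub>v (l \<cdot>\<^sub>v p + \<nu> \<cdot>\<^sub>v p + \<nu> \<cdot>\<^sub>v p)"
        unfolding ATA[OF pc] c_def[symmetric] d_def[symmetric] nu by simp
      also have "\<dots> = ((l + 2 * \<nu>) / 4) \<cdot>\<^sub>v p"
        by (intro eq_vecI) (use pc in \<open>auto simp: field_simps\<close>)
      finally show ?thesis by blast
    qed
    show ?thesis using ev_a ev_d cd unfolding c_def d_def by blast
  qed
  show ?thesis using S main unfolding C_def D_def by blast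
qed

lemma D_zero_imp: fixes A B :: "real mat"
  assumes AB: "A \<in> carrier_mat m n" "B \<in> carrier_mat m n" and q: "q \<in> carrier_vec n"
    and h: "(A - B) *\<^sub>v q = 0\<^sub>v m"
  shows "B *\<^sub>v q = A *\<^sub>v q"
proof -
  have "(A - B) *\<^sub>v q = A *\<^sub>v q - B *\<^sub>v q" by (rule minus_mult_distrib_mat_vec[OF AB q])
  hence e: "A *\<^sub>v q - B *\<^sub>v q = 0\<^sub>v m" using h by simp
  show ?thesis
  proof (rule eq_vecI)
    fix i assume "i < dim_vec (A *\<^sub>v q)"
    hence i: "i < m" using AB by simp
    have "(A *\<^sub>v q - B *\<^sub>v q) $ i = 0\<^sub>v m $ i" using e by simp
    thus "(B *\<^sub>v q) $ i = (A *\<^sub>v q) $ i" using i AB q by simp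
  qed (use AB in auto)
qed

lemma C_zero_imp: fixes A B :: "real mat"
  assumes AB: "A \<in> carrier_mat m n" "B \<in> carrier_mat m n" and q: "q \<in> carrier_vec n"
    and h: "(A + B) *\<^sub>v q = 0\<^sub>v m"
  shows "B *\<^sub>v q = - (A *\<^sub>v q)" "(A - B) *\<^sub>v q = 2 \<cdot>\<^sub>v (A *\<^sub>v q)"
proof -
  have "(A + B) *\<^sub>v q = A *\<^sub>v q + B *\<^sub>v q" by (rule add_mult_distrib_mat_vec[OF AB q])
  hence e: "A *\<^sub>v q + B *\<^sub>v q = 0\<^sub>v m" using h by simp
  have ei: "(A *\<^sub>v q) $ i + (B *\<^sub>v q) $ i = 0" if i: "i < m" for i
  proof -
    have "(A *\<^sub>v q + B *\<^sub>v q) $ i = 0\<^sub>v m $ i" using e by simp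
    thus ?thesis using i AB q by simp
  qed
  show "B *\<^sub>v q = - (A *\<^sub>v q)"
  proof (rule eq_vecI)
    fix i assume "i < dim_vec (- (A *\<^sub>v q))"
    hence i: "i < m" using AB by simp
    thus "(B *\<^sub>v q) $ i = (- (A *\<^sub>v q)) $ i" using ei[OF i] AB q by simp
  qed (use AB in auto)
  have "(A - B) *\<^sub>v q = A *\<^sub>v q - B *\<^sub>v q" by (rule minus_mult_distrib_mat_vec[OF AB q])
  also have "\<dots> = 2 \<cdot>\<^sub>v (A *\<^sub>v q)"
  proof (rule eq_vecI)
    fix i assume "i < dim_vec (2 \<cdot>\<^sub>v (A *\<^sub>v q))"
    hence i: "i < m" using AB by simp
    thus "(A *\<^sub>v q - B *\<^sub>v q) $ i = (2 \<cdot>\<^sub>v (A *\<^sub>v q)) $ i" using ei[OF i] AB q by simp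
  qed (use AB in auto)
  finally show "(A - B) *\<^sub>v q = 2 \<cdot>\<^sub>v (A *\<^sub>v q)" .
qed

lemma SV_lemma: fixes A :: "real mat"
  assumes A: "A \<in> carrier_mat m n" and p: "p \<in> carrier_vec n" "p \<bullet> p = 1"
    and ev: "A\<^sup>T *\<^sub>v (A *\<^sub>v p) = \<mu> \<cdot>\<^sub>v p" and nz: "A *\<^sub>v p \<noteq> 0\<^sub>v m"
  shows "singular_triple m n A (sqrt ((A *\<^sub>v p) \<bullet> (A *\<^sub>v p))) ((1 / sqrt ((A *\<^sub>v p) \<bullet> (A *\<^sub>v p))) \<cdot>\<^sub>v (A *\<^sub>v p)) p"
    "sqrt ((A *\<^sub>v p) \<bullet> (A *\<^sub>v p)) > 0"
proof -
  define a where "a = A *\<^sub>v p"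
  have ac: "a \<in> carrier_vec m" unfolding a_def using A p by auto
  have pos: "a \<bullet> a > 0" using real_self_dot_gt_0[OF ac] nz unfolding a_def by simp
  define s where "s = sqrt (a \<bullet> a)"
  have s: "s > 0" "s * s = a \<bullet> a" unfolding s_def using pos by auto
  have mu: "\<mu> = a \<bullet> a"
  proof -
    have "(A\<^sup>T *\<^sub>v a) \<bullet> p = a \<bullet> a" unfolding a_def by (rule transpose_vec_mult_scalar[OF A p(1) ac[unfolded a_def]])
    thus ?thesis using ev p unfolding a_def by simp
  qed
  define u where "u = (1 / s) \<cdot>\<^sub>v a"
  have uc: "u \<in> carrier_vec m" unfolding u_def using ac by auto
  have "u \<bullet> u = (1/s) * (1/s) * (a \<bullet> a)" unfolding u_def using ac by simp
  also have "\<dots> = 1" using s pos by (simp add: field_simps)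
  finally have uu: "u \<bullet> u = 1" .
  have Av: "A *\<^sub>v p = s \<cdot>\<^sub>v u" unfolding u_def a_def[symmetric] using s
    by (simp add: smult_smult_assoc)
  have "A\<^sup>T *\<^sub>v u = (1/s) \<cdot>\<^sub>v (A\<^sup>T *\<^sub>v a)" unfolding u_def by (rule mult_mat_vec[of _ n m]) (use A ac in auto)
  also have "A\<^sup>T *\<^sub>v a = (s * s) \<cdot>\<^sub>v p" using ev mu s(2) unfolding a_def by simp
  also have "(1/s) \<cdot>\<^sub>v ((s * s) \<cdot>\<^sub>v p) = s \<cdot>\<^sub>v p"
  proof -
    have "1/s * (s * s) = s" using s(1) by simp
    thus ?thesis by (simp add: smult_smult_assoc del: divide_const_simps)
  qed
  finally have ATu: "A\<^sup>T *\<^sub>v u = s \<cdot>\<^sub>v p" .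
  show "singular_triple m n A (sqrt ((A *\<^sub>v p) \<bullet> (A *\<^sub>v p))) ((1 / sqrt ((A *\<^sub>v p) \<bullet> (A *\<^sub>v p))) \<cdot>\<^sub>v (A *\<^sub>v p)) p"
    unfolding singular_triple_def a_def[symmetric] s_def[symmetric] u_def[symmetric]
    using s uc p uu Av[folded a_def] ATu by simp
  show "sqrt ((A *\<^sub>v p) \<bullet> (A *\<^sub>v p)) > 0" using s unfolding s_def a_def by simp
qed

lemma singular_triple_eigen: fixes A :: "real mat"
  assumes A: "A \<in> carrier_mat m n" and st: "singular_triple m n A \<sigma> u v"
  shows "A\<^sup>T *\<^sub>v (A *\<^sub>v v) = (\<sigma> * \<sigma>) \<cdot>\<^sub>v v" "v \<in> carrier_vec n" "v \<bullet> v = 1"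
proof -
  from st have u: "u \<in> carrier_vec m" and v: "v \<in> carrier_vec n" "v \<bullet> v = 1"
    and Av: "A *\<^sub>v v = \<sigma> \<cdot>\<^sub>v u" and ATu: "A\<^sup>T *\<^sub>v u = \<sigma> \<cdot>\<^sub>v v" unfolding singular_triple_def by auto
  show "A\<^sup>T *\<^sub>v (A *\<^sub>v v) = (\<sigma> * \<sigma>) \<cdot>\<^sub>v v"
  proof -
    have "A\<^sup>T *\<^sub>v (\<sigma> \<cdot>\<^sub>v u) = \<sigma> \<cdot>\<^sub>v (A\<^sup>T *\<^sub>v u)" by (rule mult_mat_vec) (use A u in auto)
    thus ?thesis unfolding Av ATu by (simp add: smult_smult_assoc)
  qed
  show "v \<in> carrier_vec n" "v \<bullet> v = 1" using v by auto
qed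

lemma gram_rows_from_CDT: fixes A B :: "real mat"
  assumes AB: "A \<in> carrier_mat m n" "B \<in> carrier_mat m n" and h: "(A + B) * (A - B)\<^sup>T = 0\<^sub>m m m"
  shows "A * A\<^sup>T = B * B\<^sup>T"
proof (rule mat_eq_entries[of _ m m])
  fix i j assume ij: "i < m" "j < m"
  have e1: "((A + B) * (A - B)\<^sup>T) $$ (i,j) = 0" using h ij by simp
  have e2: "((A + B) * (A - B)\<^sup>T) $$ (j,i) = 0" using h ij by simp
  have sA: "(A * A\<^sup>T) $$ (j,i) = (A * A\<^sup>T) $$ (i,j)" using sym_prod[OF AB(1) AB(1) ij] .
  have sB: "(B * B\<^sup>T) $$ (j,i) = (B * B\<^sup>T) $$ (i,j)" using sym_prod[OF AB(2) AB(2) ij] .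
  show "(A * A\<^sup>T) $$ (i,j) = (B * B\<^sup>T) $$ (i,j)"
    using e1 e2 entry_CDT[OF AB ij] entry_CDT[OF AB ij(2,1)] sA sB by simp
qed (use AB in auto)

lemma P4_imp_P1:
  fixes A B :: "real mat"
  assumes AB: "A \<in> carrier_mat m n" "B \<in> carrier_mat m n"
    and zo: "zero_one_mat A" "zero_one_mat B" "A \<noteq> B"
    and sv: "\<forall>v\<in>set vs. \<exists>\<sigma>>0. right_singular_vector m n A \<sigma> v"
    and bas: "vec_space.is_basis_list n vs (vec_space.row_space n (A - B))"
    and ker: "\<forall>v\<in>set vs. (A + B) *\<^sub>v v = 0\<^sub>v m"
  shows "gram_mates A B \<and> (A + B) * (A - B)\<^sup>T = 0\<^sub>m m m"
proof -
  interpret N: rvs n .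
  define C where "C = A + B"
  define D where "D = A - B"
  have C: "C \<in> carrier_mat m n" and D: "D \<in> carrier_mat m n" unfolding C_def D_def using AB by auto
  have DT: "D\<^sup>T \<in> carrier_mat n m" using D by auto
  from bas have vsc: "set vs \<subseteq> carrier_vec n" and W: "N.span (set vs) = N.row_space D"
    unfolding N.is_basis_list_def D_def by auto
  have ev_vs: "\<exists>s. A\<^sup>T *\<^sub>v (A *\<^sub>v v) = s \<cdot>\<^sub>v v" if v: "v \<in> set vs" for v
    using sv v singular_triple_eigen(1)[OF AB(1)] unfolding right_singular_vector_def by blast
  have rows_c: "set (rows D) \<subseteq> carrier_vec n" using D rows_carrier[of D] by auto
  have rowsW: "set (rows D) \<subseteq> N.span (set vs)"
    unfolding W N.row_space_def using N.in_own_span[OF rows_c] .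
  have oc: "N.orthogonal_complement (N.span (set vs)) = N.orthogonal_complement (set vs)"
    by (rule N.in_orthogonal_complement_span[OF vsc])
  have Ckill: "C *\<^sub>v w = 0\<^sub>v m" if w: "w \<in> N.span (set vs)" for w
  proof (rule eq_vecI)
    fix i assume "i < dim_vec (0\<^sub>v m)"
    hence i: "i < m" by simp
    have "row C i \<in> N.orthogonal_complement (set vs)"
      unfolding N.orthogonal_complement_def
    proof (intro CollectI conjI ballI)
      show "row C i \<in> carrier_vec n" using C by auto
      fix v assume v: "v \<in> set vs"
      have "(C *\<^sub>v v) $ i = 0" using ker v i unfolding C_def by simp
      thus "row C i \<bullet> v = 0" using C i by simp
    qed
    hence "row C i \<in> N.orthogonal_complement (N.span (set vs))" using oc by simp
    hence "row C i \<bullet> w = 0" using w unfolding N.orthogonal_complement_def by auto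
    thus "(C *\<^sub>v w) $ i = 0\<^sub>v m $ i" using C i by simp
  qed (use C in auto)
  have CDT: "C * D\<^sup>T = 0\<^sub>m m m"
  proof (rule mat_eq_entries[of _ m m])
    fix i j assume ij: "i < m" "j < m"
    have rj: "row D j \<in> N.span (set vs)" using rowsW ij D by (auto simp: rows_def)
    have "(C *\<^sub>v row D j) $ i = 0" using Ckill[OF rj] ij by simp
    thus "(C * D\<^sup>T) $$ (i,j) = 0\<^sub>m m m $$ (i,j)" using C D ij by simp
  qed (use C D in auto)
  define R where "R = D\<^sup>T * D"
  have R: "R \<in> carrier_mat n n" unfolding R_def using D by auto
  have Rsym: "R\<^sup>T = R" unfolding R_def using transpose_mult[OF DT D] by simp
  obtain S where S: "orthonormal n S" "card S = n" "\<forall>s\<in>S. \<exists>l. R *\<^sub>v s = l \<cdot>\<^sub>v s"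
    using N.spectral[OF R Rsym] by blast
  have Sc: "S \<subseteq> carrier_vec n" using S(1) unfolding orthonormal_def by auto
  have rs_eq: "N.row_space D = {w \<in> carrier_vec n. \<exists>y\<in>carrier_vec m. D\<^sup>T *\<^sub>v y = w}"
    using N.row_space_eq[OF D] D by simp
  have qclass: "D *\<^sub>v q = 0\<^sub>v m \<or> q \<in> N.span (set vs)" if q: "q \<in> S" for q
  proof (cases "D *\<^sub>v q = 0\<^sub>v m")
    case True thus ?thesis by simp
  next
    case False
    note nz = False
    have qc: "q \<in> carrier_vec n" using q Sc by auto
    obtain \<nu> where nu: "R *\<^sub>v q = \<nu> \<cdot>\<^sub>v q" using S(3) q by blast
    have Rq: "R *\<^sub>v q = D\<^sup>T *\<^sub>v (D *\<^sub>v q)" unfolding R_def using assoc_mult_mat_vec[OF DT D qc] .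
    have Dqc: "D *\<^sub>v q \<in> carrier_vec m" using D qc by auto
    have "(D *\<^sub>v q) \<bullet> (D *\<^sub>v q) = (D\<^sup>T *\<^sub>v (D *\<^sub>v q)) \<bullet> q"
      using transpose_vec_mult_scalar[OF D qc Dqc] by simp
    also have "\<dots> = \<nu> * (q \<bullet> q)" using nu Rq qc by simp
    finally have "\<nu> \<noteq> 0" using real_self_dot_eq_0[OF Dqc] nz by auto
    have "D\<^sup>T *\<^sub>v ((1 / \<nu>) \<cdot>\<^sub>v (D *\<^sub>v q)) = (1 / \<nu>) \<cdot>\<^sub>v (D\<^sup>T *\<^sub>v (D *\<^sub>v q))"
      by (rule mult_mat_vec[OF DT Dqc])
    also have "\<dots> = q" unfolding Rq[symmetric] nu using \<open>\<nu> \<noteq> 0\<close> by (simp add: smult_smult_assoc)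
    finally have qe: "D\<^sup>T *\<^sub>v ((1 / \<nu>) \<cdot>\<^sub>v (D *\<^sub>v q)) = q" .
    have yc: "(1 / \<nu>) \<cdot>\<^sub>v (D *\<^sub>v q) \<in> carrier_vec m" using Dqc by simp
    have "q \<in> N.row_space D" unfolding rs_eq
      by (rule CollectI, rule conjI[OF qc], rule bexI[of "\<lambda>y. D\<^sup>T *\<^sub>v y = q" "(1 / \<nu>) \<cdot>\<^sub>v (D *\<^sub>v q)" "carrier_vec m", OF qe yc])
    thus ?thesis unfolding W by simp
  qed
  have Kperp: "q \<in> N.orthogonal_complement (set vs)" if qc: "q \<in> carrier_vec n" and Dq: "D *\<^sub>v q = 0\<^sub>v m" for q
  proof -
    have "q \<in> N.orthogonal_complement (set (rows D))"
      unfolding N.orthogonal_complement_def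
    proof (intro CollectI conjI ballI)
      show "q \<in> carrier_vec n" by fact
      fix r assume "r \<in> set (rows D)"
      then obtain j where j: "j < m" "r = row D j" using D by (auto simp: rows_def)
      have "(D *\<^sub>v q) $ j = 0" using Dq j by simp
      hence "row D j \<bullet> q = 0" using D j by simp
      thus "q \<bullet> r = 0" using j comm_scalar_prod[OF qc, of "row D j"] D by auto
    qed
    hence "q \<in> N.orthogonal_complement (N.span (set (rows D)))"
      using N.in_orthogonal_complement_span[OF rows_c] by simp
    thus ?thesis using W oc unfolding N.row_space_def by simp
  qed
  have perp_span: "x \<bullet> w = 0" if x: "x \<in> N.orthogonal_complement (set vs)" and w: "w \<in> N.span (set vs)" for x w
  proof -
    have "x \<in> N.orthogonal_complement (N.span (set vs))" using x oc by simp
    thus ?thesis using w unfolding N.orthogonal_complement_def by auto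
  qed
  have caseK: "B\<^sup>T *\<^sub>v (B *\<^sub>v q) = A\<^sup>T *\<^sub>v (A *\<^sub>v q)" if q: "q \<in> carrier_vec n" and Dq: "D *\<^sub>v q = 0\<^sub>v m" for q
  proof -
    have Aqc: "A *\<^sub>v q \<in> carrier_vec m" using AB q by auto
    define z where "z = D\<^sup>T *\<^sub>v (A *\<^sub>v q)"
    have zc: "z \<in> carrier_vec n" unfolding z_def using DT Aqc by auto
    have zW: "z \<in> N.span (set vs)" unfolding W rs_eq z_def using DT Aqc by auto
    have zperp: "z \<in> N.orthogonal_complement (set vs)"
      unfolding N.orthogonal_complement_def
    proof (intro CollectI conjI ballI)
      show "z \<in> carrier_vec n" by fact
      fix v assume v: "v \<in> set vs"
      have vc: "v \<in> carrier_vec n" using v vsc by auto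
      obtain s where s: "A\<^sup>T *\<^sub>v (A *\<^sub>v v) = s \<cdot>\<^sub>v v" using ev_vs[OF v] by blast
      have Dv: "D *\<^sub>v v = 2 \<cdot>\<^sub>v (A *\<^sub>v v)" unfolding D_def
        by (rule C_zero_imp(2)[OF AB vc]) (use ker v in auto)
      have Avc: "A *\<^sub>v v \<in> carrier_vec m" using AB vc by auto
      have "z \<bullet> v = (A *\<^sub>v q) \<bullet> (D *\<^sub>v v)" unfolding z_def by (rule transpose_vec_mult_scalar[OF D vc Aqc])
      also have "\<dots> = 2 * ((A *\<^sub>v q) \<bullet> (A *\<^sub>v v))" unfolding Dv using Aqc Avc by simp
      also have "(A *\<^sub>v q) \<bullet> (A *\<^sub>v v) = (A\<^sup>T *\<^sub>v (A *\<^sub>v v)) \<bullet> q"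
        using transpose_vec_mult_scalar[OF AB(1) q Avc] comm_scalar_prod[OF Aqc Avc] by simp
      also have "\<dots> = s * (v \<bullet> q)" unfolding s using vc q by simp
      also have "v \<bullet> q = q \<bullet> v" using comm_scalar_prod[OF vc q] .
      also have "q \<bullet> v = 0" using Kperp[OF q Dq] v unfolding N.orthogonal_complement_def by auto
      finally show "z \<bullet> v = 0" by simp
    qed
    have "z \<bullet> z = 0" using perp_span[OF zperp zW] .
    hence z0: "z = 0\<^sub>v n" using real_self_dot_eq_0[OF zc] by simp
    have Bq: "B *\<^sub>v q = A *\<^sub>v q" using D_zero_imp[OF AB q] Dq unfolding D_def by simp
    have "D\<^sup>T = A\<^sup>T - B\<^sup>T" unfolding D_def by (rule transpose_minus[OF AB])
    hence "z = A\<^sup>T *\<^sub>v (A *\<^sub>v q) - B\<^sup>T *\<^sub>v (A *\<^sub>v q)" unfolding z_def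
      using minus_mult_distrib_mat_vec[of "A\<^sup>T" n m "B\<^sup>T" "A *\<^sub>v q"] AB Aqc by simp
    hence e: "A\<^sup>T *\<^sub>v (A *\<^sub>v q) - B\<^sup>T *\<^sub>v (A *\<^sub>v q) = 0\<^sub>v n" using z0 by simp
    have "B\<^sup>T *\<^sub>v (A *\<^sub>v q) = A\<^sup>T *\<^sub>v (A *\<^sub>v q)"
      by (rule vec_eq_of_minus_zero[OF _ _ e, symmetric]) (use AB Aqc in auto)
    thus ?thesis using Bq by simp
  qed
  have allq: "B\<^sup>T *\<^sub>v (B *\<^sub>v q) = A\<^sup>T *\<^sub>v (A *\<^sub>v q)" if q: "q \<in> S" for q
  proof (cases "D *\<^sub>v q = 0\<^sub>v m")
    case True thus ?thesis using caseK q Sc by auto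
  next
    case False
    hence qW: "q \<in> N.span (set vs)" using qclass[OF q] by auto
    have qc: "q \<in> carrier_vec n" using q Sc by auto
    have Bq: "B *\<^sub>v q = - (A *\<^sub>v q)" using C_zero_imp(1)[OF AB qc] Ckill[OF qW] unfolding C_def by simp
    have Aqc: "A *\<^sub>v q \<in> carrier_vec m" and Bqc: "B *\<^sub>v q \<in> carrier_vec m" using AB qc by auto
    have l: "B\<^sup>T *\<^sub>v (B *\<^sub>v q) \<in> carrier_vec n" and r: "A\<^sup>T *\<^sub>v (A *\<^sub>v q) \<in> carrier_vec n" using AB Aqc Bqc by auto
    have "B\<^sup>T *\<^sub>v (B *\<^sub>v q) - A\<^sup>T *\<^sub>v (A *\<^sub>v q) = 0\<^sub>v n"
    proof (rule N.orthonormal_perp_zero[OF S(1,2)])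
      show "B\<^sup>T *\<^sub>v (B *\<^sub>v q) - A\<^sup>T *\<^sub>v (A *\<^sub>v q) \<in> carrier_vec n" using l r by auto
      show "\<forall>t\<in>S. (B\<^sup>T *\<^sub>v (B *\<^sub>v q) - A\<^sup>T *\<^sub>v (A *\<^sub>v q)) \<bullet> t = 0"
      proof
        fix k assume k: "k \<in> S"
        have kc: "k \<in> carrier_vec n" using k Sc by auto
        have Akc: "A *\<^sub>v k \<in> carrier_vec m" and Bkc: "B *\<^sub>v k \<in> carrier_vec m" using AB kc by auto
        have e1: "(B\<^sup>T *\<^sub>v (B *\<^sub>v q)) \<bullet> k = (B *\<^sub>v q) \<bullet> (B *\<^sub>v k)"
          by (rule transpose_vec_mult_scalar[OF AB(2) kc Bqc])
        have e2: "(A\<^sup>T *\<^sub>v (A *\<^sub>v q)) \<bullet> k = (A *\<^sub>v q) \<bullet> (A *\<^sub>v k)"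
          by (rule transpose_vec_mult_scalar[OF AB(1) kc Aqc])
        have "(B *\<^sub>v q) \<bullet> (B *\<^sub>v k) = (A *\<^sub>v q) \<bullet> (A *\<^sub>v k)"
        proof (cases "D *\<^sub>v k = 0\<^sub>v m")
          case True
          have "(B *\<^sub>v q) \<bullet> (B *\<^sub>v k) = (B *\<^sub>v k) \<bullet> (B *\<^sub>v q)" using comm_scalar_prod[OF Bqc Bkc] .
          also have "\<dots> = (B\<^sup>T *\<^sub>v (B *\<^sub>v k)) \<bullet> q" using transpose_vec_mult_scalar[OF AB(2) qc Bkc] by simp
          also have "\<dots> = (A\<^sup>T *\<^sub>v (A *\<^sub>v k)) \<bullet> q" using caseK[OF kc True] by simp
          also have "\<dots> = (A *\<^sub>v k) \<bullet> (A *\<^sub>v q)" using transpose_vec_mult_scalar[OF AB(1) qc Akc] by simp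
          also have "\<dots> = (A *\<^sub>v q) \<bullet> (A *\<^sub>v k)" using comm_scalar_prod[OF Akc Aqc] .
          finally show ?thesis .
        next
          case False
          hence kW: "k \<in> N.span (set vs)" using qclass[OF k] by auto
          have Bk: "B *\<^sub>v k = - (A *\<^sub>v k)" using C_zero_imp(1)[OF AB kc] Ckill[OF kW] unfolding C_def by simp
          show ?thesis unfolding Bq Bk using Aqc Akc by simp
        qed
        thus "(B\<^sup>T *\<^sub>v (B *\<^sub>v q) - A\<^sup>T *\<^sub>v (A *\<^sub>v q)) \<bullet> k = 0"
          using minus_scalar_prod_distrib[OF l r kc] e1 e2 by simp
      qed
    qed
    thus ?thesis using vec_eq_of_minus_zero[OF l r] by simp
  qed
  have G2: "A\<^sup>T * A = B\<^sup>T * B"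
  proof (rule mat_eq_entries[of _ n n])
    fix i j assume ij: "i < n" "j < n"
    define r where "r = row (B\<^sup>T * B) i - row (A\<^sup>T * A) i"
    have rc: "r \<in> carrier_vec n" unfolding r_def carrier_vec_def using AB by simp
    have "r = 0\<^sub>v n"
    proof (rule N.orthonormal_perp_zero[OF S(1,2) rc], intro ballI)
      fix q assume q: "q \<in> S"
      have qc: "q \<in> carrier_vec n" using q Sc by auto
      have "((B\<^sup>T * B) *\<^sub>v q) $ i = ((A\<^sup>T * A) *\<^sub>v q) $ i"
        using allq[OF q] assoc_mult_mat_vec[of "B\<^sup>T" n m B n q] assoc_mult_mat_vec[of "A\<^sup>T" n m A n q] AB qc by simp
      hence "row (B\<^sup>T * B) i \<bullet> q = row (A\<^sup>T * A) i \<bullet> q" using AB ij by simp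
      thus "r \<bullet> q = 0" unfolding r_def using minus_scalar_prod_distrib[of "row (B\<^sup>T * B) i" n "row (A\<^sup>T * A) i" q] AB qc ij by simp
    qed
    hence "r $ j = 0" using ij by simp
    thus "(A\<^sup>T * A) $$ (i,j) = (B\<^sup>T * B) $$ (i,j)" unfolding r_def using AB ij by simp
  qed (use AB in auto)
  have CDT': "(A + B) * (A - B)\<^sup>T = 0\<^sub>m m m" using CDT unfolding C_def D_def .
  have G1: "A * A\<^sup>T = B * B\<^sup>T" by (rule gram_rows_from_CDT[OF AB CDT'])
  show ?thesis unfolding gram_mates_def using zo G1 G2 CDT' by auto
qed

lemma P1_imp_P4:
  fixes A B :: "real mat"
  assumes AB: "A \<in> carrier_mat m n" "B \<in> carrier_mat m n"
    and G2: "A\<^sup>T * A = B\<^sup>T * B" and CDT: "(A + B) * (A - B)\<^sup>T = 0\<^sub>m m m"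
  shows "\<exists>vs. length vs = vec_space.rank m (A - B) \<and> length vs = vec_space.rank n (A - B)\<^sup>T \<and>
     (\<forall>v\<in>set vs. \<exists>\<sigma>>0. right_singular_vector m n A \<sigma> v) \<and>
     vec_space.is_basis_list n vs (vec_space.row_space n (A - B)) \<and>
     (\<forall>v\<in>set vs. (A + B) *\<^sub>v v = 0\<^sub>v m)"
proof -
  interpret N: rvs n .
  obtain S where S: "orthonormal n S" "card S = n" and SP: "\<forall>p\<in>S.
      (\<exists>\<mu>. A\<^sup>T *\<^sub>v (A *\<^sub>v p) = \<mu> \<cdot>\<^sub>v p) \<and> (\<exists>\<nu>. (A - B)\<^sup>T *\<^sub>v ((A - B) *\<^sub>v p) = \<nu> \<cdot>\<^sub>v p) \<and>
      ((A + B) *\<^sub>v p = 0\<^sub>v m \<or> (A - B) *\<^sub>v p = 0\<^sub>v m)"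
    using struct_lemma[OF AB G2 CDT] by blast
  have D: "A - B \<in> carrier_mat m n" using AB by auto
  have Sc: "S \<subseteq> carrier_vec n" "finite S" using N.orthonormal_carrier[OF S(1)] N.orthonormal_finite[OF S(1)] by auto
  let ?T = "{p\<in>S. (A - B) *\<^sub>v p \<noteq> 0\<^sub>v m}"
  have ev: "\<forall>p\<in>S. \<exists>\<nu>. (A - B)\<^sup>T *\<^sub>v ((A - B) *\<^sub>v p) = \<nu> \<cdot>\<^sub>v p" using SP by blast
  note RL = rank_lemma[OF D S ev]
  obtain vs where vs: "set vs = ?T" "distinct vs" using finite_distinct_list[of ?T] Sc by auto
  have len: "length vs = card ?T" using distinct_card[OF vs(2)] vs(1) by simp
  have TO: "orthonormal n ?T" using N.orthonormal_subset[OF S(1)] by auto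
  have sv: "\<exists>\<sigma>>0. right_singular_vector m n A \<sigma> v" and ker: "(A + B) *\<^sub>v v = 0\<^sub>v m" if v: "v \<in> set vs" for v
  proof -
    have vS: "v \<in> S" and Dv: "(A - B) *\<^sub>v v \<noteq> 0\<^sub>v m" using v vs by auto
    have vc: "v \<in> carrier_vec n" using vS Sc by auto
    have vv: "v \<bullet> v = 1" using S(1) vS unfolding orthonormal_def by auto
    from SP vS Dv have Cv: "(A + B) *\<^sub>v v = 0\<^sub>v m" and mu: "\<exists>\<mu>. A\<^sup>T *\<^sub>v (A *\<^sub>v v) = \<mu> \<cdot>\<^sub>v v" by auto
    show "(A + B) *\<^sub>v v = 0\<^sub>v m" by fact
    have "(A - B) *\<^sub>v v = 2 \<cdot>\<^sub>v (A *\<^sub>v v)" by (rule C_zero_imp(2)[OF AB vc Cv])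
    hence Av: "A *\<^sub>v v \<noteq> 0\<^sub>v m" using Dv by auto
    from mu obtain \<mu> where mu: "A\<^sup>T *\<^sub>v (A *\<^sub>v v) = \<mu> \<cdot>\<^sub>v v" by blast
    from SV_lemma[OF AB(1) vc vv mu Av] show "\<exists>\<sigma>>0. right_singular_vector m n A \<sigma> v"
      unfolding right_singular_vector_def by blast
  qed
  have bas: "N.is_basis_list vs (N.row_space (A - B))"
    unfolding N.is_basis_list_def
  proof (intro conjI)
    show "set vs \<subseteq> carrier_vec n" using vs Sc by auto
    show "distinct vs" by fact
    show "N.lin_indpt (set vs)" using N.orthonormal_indpt[OF TO] vs by simp
    show "N.span (set vs) = N.row_space (A - B)" using RL(1) vs by simp
  qed
  show ?thesis
    by (rule exI[of _ vs]) (use len RL(2,3) sv ker bas in auto)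
qed

lemma factor_prod: fixes U V X Y :: "real mat"
  assumes U: "U \<in> carrier_mat m m" and V: "V \<in> carrier_mat n n" and VV: "V\<^sup>T * V = 1\<^sub>m n"
    and X: "X \<in> carrier_mat m n" and Y: "Y \<in> carrier_mat m n"
  shows "(U * X * V\<^sup>T) * (U * Y * V\<^sup>T)\<^sup>T = U * (X * Y\<^sup>T) * U\<^sup>T"
proof -
  have UX: "U * X \<in> carrier_mat m n" and UY: "U * Y \<in> carrier_mat m n" using U X Y by auto
  have VT: "V\<^sup>T \<in> carrier_mat n n" using V by auto
  have YT: "Y\<^sup>T \<in> carrier_mat n m" and UT: "U\<^sup>T \<in> carrier_mat m m" using Y U by auto
  have "(U * Y * V\<^sup>T)\<^sup>T = V\<^sup>T\<^sup>T * (U * Y)\<^sup>T" by (rule transpose_mult[OF UY VT])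
  also have "(U * Y)\<^sup>T = Y\<^sup>T * U\<^sup>T" by (rule transpose_mult[OF U Y])
  finally have e: "(U * Y * V\<^sup>T)\<^sup>T = V * (Y\<^sup>T * U\<^sup>T)" by simp
  have YU: "Y\<^sup>T * U\<^sup>T \<in> carrier_mat n m" using YT UT by auto
  have "(U * X * V\<^sup>T) * (V * (Y\<^sup>T * U\<^sup>T)) = (U * X) * (V\<^sup>T * (V * (Y\<^sup>T * U\<^sup>T)))"
    by (rule assoc_mult_mat[OF UX VT]) (use V YU in auto)
  also have "V\<^sup>T * (V * (Y\<^sup>T * U\<^sup>T)) = (V\<^sup>T * V) * (Y\<^sup>T * U\<^sup>T)" by (rule assoc_mult_mat[OF VT V YU, symmetric])
  also have "\<dots> = Y\<^sup>T * U\<^sup>T" unfolding VV by (rule left_mult_one_mat[OF YU])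
  also have "(U * X) * (Y\<^sup>T * U\<^sup>T) = U * (X * (Y\<^sup>T * U\<^sup>T))" by (rule assoc_mult_mat[OF U X YU])
  also have "X * (Y\<^sup>T * U\<^sup>T) = (X * Y\<^sup>T) * U\<^sup>T" by (rule assoc_mult_mat[OF X YT UT, symmetric])
  also have "U * ((X * Y\<^sup>T) * U\<^sup>T) = U * (X * Y\<^sup>T) * U\<^sup>T"
    by (rule assoc_mult_mat[symmetric]) (use U X YT UT in auto)
  finally show ?thesis unfolding e .
qed

lemma factor_prodT: fixes U V X Y :: "real mat"
  assumes U: "U \<in> carrier_mat m m" and UU: "U\<^sup>T * U = 1\<^sub>m m" and V: "V \<in> carrier_mat n n"
    and X: "X \<in> carrier_mat m n" and Y: "Y \<in> carrier_mat m n"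
  shows "(U * X * V\<^sup>T)\<^sup>T * (U * Y * V\<^sup>T) = V * (X\<^sup>T * Y) * V\<^sup>T"
proof -
  have X': "X\<^sup>T \<in> carrier_mat n m" and Y': "Y\<^sup>T \<in> carrier_mat n m" using X Y by auto
  have UT: "U\<^sup>T \<in> carrier_mat m m" and VT: "V\<^sup>T \<in> carrier_mat n n" using U V by auto
  have "(V * X\<^sup>T * U\<^sup>T) * (V * Y\<^sup>T * U\<^sup>T)\<^sup>T = V * (X\<^sup>T * Y\<^sup>T\<^sup>T) * V\<^sup>T"
    by (rule factor_prod[OF V U UU X' Y'])
  moreover have "(U * X * V\<^sup>T)\<^sup>T = V * X\<^sup>T * U\<^sup>T"
  proof -
    have "(U * X * V\<^sup>T)\<^sup>T = V\<^sup>T\<^sup>T * (U * X)\<^sup>T" by (rule transpose_mult) (use U X V in auto)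
    also have "(U * X)\<^sup>T = X\<^sup>T * U\<^sup>T" by (rule transpose_mult[OF U X])
    finally show ?thesis using V X' UT by (simp add: assoc_mult_mat)
  qed
  moreover have "(V * Y\<^sup>T * U\<^sup>T)\<^sup>T = U * Y * V\<^sup>T"
  proof -
    have "(V * Y\<^sup>T * U\<^sup>T)\<^sup>T = U\<^sup>T\<^sup>T * (V * Y\<^sup>T)\<^sup>T" by (rule transpose_mult) (use U Y V in auto)
    also have "(V * Y\<^sup>T)\<^sup>T = Y\<^sup>T\<^sup>T * V\<^sup>T" by (rule transpose_mult[OF V Y'])
    finally show ?thesis using U Y VT by (simp add: assoc_mult_mat)
  qed
  ultimately show ?thesis by simp
qed

lemma diag_right_entry: fixes X Y :: "real mat"
  assumes X: "X \<in> carrier_mat p k" and Y: "Y \<in> carrier_mat k q"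
    and Yd: "\<And>l j. l < k \<Longrightarrow> j < q \<Longrightarrow> Y $$ (l,j) = (if l = j then d j else 0)"
    and ij: "i < p" "j < q"
  shows "(X * Y) $$ (i,j) = (if j < k then X $$ (i,j) * d j else 0)"
proof -
  have "(X * Y) $$ (i,j) = (\<Sum>l\<in>{0..<k}. X $$ (i,l) * Y $$ (l,j))" using X Y ij by (simp add: scalar_prod_def)
  also have "\<dots> = (\<Sum>l\<in>{0..<k}. if l = j then X $$ (i,j) * d j else 0)"
    using Yd ij by (intro sum.cong refl) auto
  also have "\<dots> = (if j < k then X $$ (i,j) * d j else 0)" by (simp add: sum.delta')
  finally show ?thesis .
qed

lemma sign_change_imp:
  fixes A B :: "real mat"
  assumes AB: "A \<in> carrier_mat m n" "B \<in> carrier_mat m n" and P3: "sign_change_sv m n k A B"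
  shows "A * A\<^sup>T = B * B\<^sup>T \<and> A\<^sup>T * A = B\<^sup>T * B \<and> A * B\<^sup>T = B * A\<^sup>T"
proof -
  obtain U V \<Sigma> S where U: "orthogonal_real_mat m U" and V: "orthogonal_real_mat n V"
    and Sg: "rect_diag_nonneg m n \<Sigma>" and A: "A = U * \<Sigma> * V\<^sup>T" and S: "S \<in> carrier_mat m m" "diagonal_mat S"
    "\<forall>i<m. S $$ (i,i) = 1 \<or> S $$ (i,i) = -1" and B: "B = U * S * \<Sigma> * V\<^sup>T"
    using P3 unfolding sign_change_sv_def by blast
  have Uc: "U \<in> carrier_mat m m" "U\<^sup>T * U = 1\<^sub>m m" using U unfolding orthogonal_real_mat_def by auto
  have Vc: "V \<in> carrier_mat n n" "V\<^sup>T * V = 1\<^sub>m n" using V unfolding orthogonal_real_mat_def by auto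
  have Sgc: "\<Sigma> \<in> carrier_mat m n" and Sgd: "\<And>i j. i < m \<Longrightarrow> j < n \<Longrightarrow> i \<noteq> j \<Longrightarrow> \<Sigma> $$ (i,j) = 0"
    using Sg unfolding rect_diag_nonneg_def by auto
  define Y where "Y = S * \<Sigma>"
  have Yc: "Y \<in> carrier_mat m n" unfolding Y_def using S Sgc by auto
  have B': "B = U * Y * V\<^sup>T" unfolding B Y_def using Uc S Sgc by (simp add: assoc_mult_mat[of U m m S m \<Sigma> n])
  have Sd0: "\<And>i j. i < m \<Longrightarrow> j < m \<Longrightarrow> i \<noteq> j \<Longrightarrow> S $$ (i,j) = 0"
    using S(2) S(1) unfolding diagonal_mat_def by auto
  have Ye: "Y $$ (i,j) = S $$ (i,i) * \<Sigma> $$ (i,j)" if ij: "i < m" "j < n" for i j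
  proof -
    have "(\<Sigma>\<^sup>T * S\<^sup>T) $$ (j,i) = (if i < m then \<Sigma>\<^sup>T $$ (j,i) * S $$ (i,i) else 0)"
    proof (rule diag_right_entry[of _ n m _ m])
      show "\<Sigma>\<^sup>T \<in> carrier_mat n m" "S\<^sup>T \<in> carrier_mat m m" using Sgc S by auto
      show "j < n" "i < m" using ij by auto
      fix l j' assume lj: "l < m" "j' < m"
      show "S\<^sup>T $$ (l,j') = (if l = j' then S $$ (j',j') else 0)"
        using lj S(1) Sd0[OF lj(2,1)] by auto
    qed
    moreover have "Y = (\<Sigma>\<^sup>T * S\<^sup>T)\<^sup>T" unfolding Y_def
      using arg_cong[OF transpose_mult[OF S(1) Sgc], of transpose_mat] by simp
    ultimately show ?thesis using ij Sgc S by simp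
  qed
  have S2: "S $$ (i,i) * S $$ (i,i) = 1" if "i < m" for i using S(3) that by auto
  have prod0: "\<Sigma> $$ (i,l) * \<Sigma> $$ (j,l) = 0" if "i < m" "j < m" "l < n" "i \<noteq> j" for i j l
    using Sgd that by (cases "i = l") auto
  have E1: "Y * Y\<^sup>T = \<Sigma> * \<Sigma>\<^sup>T"
  proof (rule mat_eq_entries[of _ m m])
    fix i j assume ij: "i < m" "j < m"
    show "(Y * Y\<^sup>T) $$ (i,j) = (\<Sigma> * \<Sigma>\<^sup>T) $$ (i,j)"
      unfolding entry_prod[OF Yc Yc ij] entry_prod[OF Sgc Sgc ij]
    proof (intro sum.cong refl)
      fix l assume "l \<in> {0..<n}"
      hence l: "l < n" by simp
      show "Y $$ (i,l) * Y $$ (j,l) = \<Sigma> $$ (i,l) * \<Sigma> $$ (j,l)"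
      proof (cases "i = j")
        case True thus ?thesis using Ye ij l S2[OF ij(1)] by (simp add: algebra_simps)
      next
        case False
        have "Y $$ (i,l) * Y $$ (j,l) = (S $$ (i,i) * S $$ (j,j)) * (\<Sigma> $$ (i,l) * \<Sigma> $$ (j,l))"
          using Ye ij l by simp
        thus ?thesis using prod0[OF ij l False] by auto
      qed
    qed
  qed (use Yc Sgc in auto)
  have E2: "Y\<^sup>T * Y = \<Sigma>\<^sup>T * \<Sigma>"
  proof (rule mat_eq_entries[of _ n n])
    fix i j assume ij: "i < n" "j < n"
    show "(Y\<^sup>T * Y) $$ (i,j) = (\<Sigma>\<^sup>T * \<Sigma>) $$ (i,j)"
      unfolding entry_prodT[OF Yc Yc ij] entry_prodT[OF Sgc Sgc ij]
    proof (intro sum.cong refl)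
      fix l assume "l \<in> {0..<m}"
      hence l: "l < m" by simp
      show "Y $$ (l,i) * Y $$ (l,j) = \<Sigma> $$ (l,i) * \<Sigma> $$ (l,j)"
        using Ye[OF l ij(1)] Ye[OF l ij(2)] S2[OF l] by (simp add: algebra_simps)
    qed
  qed (use Yc Sgc in auto)
  have E3: "\<Sigma> * Y\<^sup>T = Y * \<Sigma>\<^sup>T"
  proof (rule mat_eq_entries[of _ m m])
    fix i j assume ij: "i < m" "j < m"
    show "(\<Sigma> * Y\<^sup>T) $$ (i,j) = (Y * \<Sigma>\<^sup>T) $$ (i,j)"
      unfolding entry_prod[OF Sgc Yc ij] entry_prod[OF Yc Sgc ij]
    proof (intro sum.cong refl)
      fix l assume "l \<in> {0..<n}"
      hence l: "l < n" by simp
      show "\<Sigma> $$ (i,l) * Y $$ (j,l) = Y $$ (i,l) * \<Sigma> $$ (j,l)"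
      proof (cases "i = j")
        case True thus ?thesis using Ye ij l by (simp add: algebra_simps)
      next
        case False
        have "\<Sigma> $$ (i,l) * Y $$ (j,l) = S $$ (j,j) * (\<Sigma> $$ (i,l) * \<Sigma> $$ (j,l))"
          "Y $$ (i,l) * \<Sigma> $$ (j,l) = S $$ (i,i) * (\<Sigma> $$ (i,l) * \<Sigma> $$ (j,l))"
          using Ye ij l by simp_all
        thus ?thesis using prod0[OF ij l False] by auto
      qed
    qed
  qed (use Yc Sgc in auto)
  have "A * A\<^sup>T = U * (\<Sigma> * \<Sigma>\<^sup>T) * U\<^sup>T" unfolding A by (rule factor_prod[OF Uc(1) Vc Sgc Sgc])
  moreover have "B * B\<^sup>T = U * (Y * Y\<^sup>T) * U\<^sup>T" unfolding B' by (rule factor_prod[OF Uc(1) Vc Yc Yc])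
  moreover have "A\<^sup>T * A = V * (\<Sigma>\<^sup>T * \<Sigma>) * V\<^sup>T" unfolding A by (rule factor_prodT[OF Uc Vc(1) Sgc Sgc])
  moreover have "B\<^sup>T * B = V * (Y\<^sup>T * Y) * V\<^sup>T" unfolding B' by (rule factor_prodT[OF Uc Vc(1) Yc Yc])
  moreover have "A * B\<^sup>T = U * (\<Sigma> * Y\<^sup>T) * U\<^sup>T" unfolding A B' by (rule factor_prod[OF Uc(1) Vc Sgc Yc])
  moreover have "B * A\<^sup>T = U * (Y * \<Sigma>\<^sup>T) * U\<^sup>T" unfolding A B' by (rule factor_prod[OF Uc(1) Vc Yc Sgc])
  ultimately show ?thesis using E1 E2 E3 by simp
qed

lemma P3_imp_P1:
  fixes A B :: "real mat"
  assumes AB: "A \<in> carrier_mat m n" "B \<in> carrier_mat m n"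
    and zo: "zero_one_mat A" "zero_one_mat B" "A \<noteq> B" and P3: "sign_change_sv m n k A B"
  shows "gram_mates A B \<and> (A + B) * (A - B)\<^sup>T = 0\<^sub>m m m"
  using sign_change_imp[OF AB P3] P1_alt[OF AB] zo unfolding gram_mates_def by auto

lemma orth_list_mat:
  assumes d: "distinct xs" and o: "orthonormal k (set xs)" and l: "length xs = k"
  shows "orthogonal_real_mat k (mat_of_cols k xs)"
proof -
  have xc: "\<And>i. i < k \<Longrightarrow> xs ! i \<in> carrier_vec k" using o l unfolding orthonormal_def by auto
  have oi: "\<And>i j. i < k \<Longrightarrow> j < k \<Longrightarrow> xs ! i \<bullet> xs ! j = (if i = j then 1 else 0)"
    using o l d unfolding orthonormal_def by (auto simp: nth_eq_iff_index_eq)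
  show ?thesis unfolding orthogonal_real_mat_def
  proof (intro conjI)
    show "mat_of_cols k xs \<in> carrier_mat k k" using mat_of_cols_carrier(1)[of k xs] l by simp
    show "(mat_of_cols k xs)\<^sup>T * mat_of_cols k xs = 1\<^sub>m k"
    proof (rule eq_matI)
      fix i j assume ij: "i < dim_row (1\<^sub>m k)" "j < dim_col (1\<^sub>m k)"
      hence "((mat_of_cols k xs)\<^sup>T * mat_of_cols k xs) $$ (i,j) = xs ! i \<bullet> xs ! j" using l xc by simp
      thus "((mat_of_cols k xs)\<^sup>T * mat_of_cols k xs) $$ (i,j) = 1\<^sub>m k $$ (i,j)" using oi ij by simp
    qed (use l in auto)
  qed
qed

lemma real_self_dot_ge0: "0 \<le> v \<bullet> (v :: real vec)"
  using conjugate_square_ge_0_vec[of v] by simp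

lemma P1_imp_P3:
  fixes A B :: "real mat"
  assumes AB: "A \<in> carrier_mat m n" "B \<in> carrier_mat m n"
    and G2: "A\<^sup>T * A = B\<^sup>T * B" and CDT: "(A + B) * (A - B)\<^sup>T = 0\<^sub>m m m"
    and k: "k = vec_space.rank m (A - B)"
  shows "sign_change_sv m n k A B"
proof -
  interpret N: rvs n .
  interpret M: rvs m .
  obtain S where S: "orthonormal n S" "card S = n" and SP: "\<forall>p\<in>S.
      (\<exists>\<mu>. A\<^sup>T *\<^sub>v (A *\<^sub>v p) = \<mu> \<cdot>\<^sub>v p) \<and> (\<exists>\<nu>. (A - B)\<^sup>T *\<^sub>v ((A - B) *\<^sub>v p) = \<nu> \<cdot>\<^sub>v p) \<and>
      ((A + B) *\<^sub>v p = 0\<^sub>v m \<or> (A - B) *\<^sub>v p = 0\<^sub>v m)"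
    using struct_lemma[OF AB G2 CDT] by blast
  have D: "A - B \<in> carrier_mat m n" using AB by auto
  have Sc: "S \<subseteq> carrier_vec n" "finite S" using N.orthonormal_carrier[OF S(1)] N.orthonormal_finite[OF S(1)] by auto
  have ev: "\<forall>p\<in>S. \<exists>\<nu>. (A - B)\<^sup>T *\<^sub>v ((A - B) *\<^sub>v p) = \<nu> \<cdot>\<^sub>v p" using SP by blast
  note RL = rank_lemma[OF D S ev]
  define T1 where "T1 = {p\<in>S. (A - B) *\<^sub>v p \<noteq> 0\<^sub>v m}"
  define T2 where "T2 = {p\<in>S. (A - B) *\<^sub>v p = 0\<^sub>v m \<and> A *\<^sub>v p \<noteq> 0\<^sub>v m}"
  define T3 where "T3 = {p\<in>S. A *\<^sub>v p = 0\<^sub>v m}"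
  have pc: "\<And>p. p \<in> S \<Longrightarrow> p \<in> carrier_vec n" using Sc by auto
  have DA: "A *\<^sub>v p \<noteq> 0\<^sub>v m" if p: "p \<in> S" "(A - B) *\<^sub>v p \<noteq> 0\<^sub>v m" for p
  proof -
    have "(A + B) *\<^sub>v p = 0\<^sub>v m" using SP p by auto
    hence "(A - B) *\<^sub>v p = 2 \<cdot>\<^sub>v (A *\<^sub>v p)" using C_zero_imp(2)[OF AB pc[OF p(1)]] by simp
    thus ?thesis using p by auto
  qed
  have T13: "T1 \<inter> T3 = {}" unfolding T1_def T3_def using DA by auto
  have fin: "finite T1" "finite T2" "finite T3" unfolding T1_def T2_def T3_def using Sc by auto
  obtain l1 where l1: "set l1 = T1" "distinct l1" using finite_distinct_list[OF fin(1)] by blast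
  obtain l2 where l2: "set l2 = T2" "distinct l2" using finite_distinct_list[OF fin(2)] by blast
  obtain l3 where l3: "set l3 = T3" "distinct l3" using finite_distinct_list[OF fin(3)] by blast
  define l12 where "l12 = l1 @ l2"
  define ps where "ps = l12 @ l3"
  have l12: "set l12 = T1 \<union> T2" "distinct l12" unfolding l12_def using l1 l2
    by (auto simp: T1_def T2_def)
  have ps: "set ps = S" "distinct ps" unfolding ps_def using l12 l3 T13
    by (auto simp: T1_def T2_def T3_def)
  have lenps: "length ps = n" using distinct_card[OF ps(2)] ps(1) S(2) by simp
  define kk where "kk = length l1"
  define r where "r = length l12"
  have kkr: "kk \<le> r" unfolding kk_def r_def l12_def by simp
  have rn: "r \<le> n" using lenps unfolding ps_def r_def by simp
  have kk_eq: "kk = k" unfolding kk_def k RL(2) using distinct_card[OF l1(2)] l1(1) T1_def by simp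
  have ps_l12: "ps ! j = l12 ! j" if "j < r" for j using that unfolding ps_def r_def by (simp add: nth_append)
  have psT1: "ps ! j \<in> T1" if "j < kk" for j
    using that l1 nth_mem[of j l1] unfolding ps_def l12_def kk_def by (simp add: nth_append)
  have psT2: "ps ! j \<in> T2" if "kk \<le> j" "j < r" for j
  proof -
    have jl: "j - kk < length l2" using that unfolding kk_def r_def l12_def by simp
    have "ps ! j = l2 ! (j - kk)" using that jl unfolding ps_def l12_def kk_def r_def by (simp add: nth_append)
    moreover note jl
    ultimately show ?thesis using l2(1) nth_mem by metis
  qed
  have psT3: "ps ! j \<in> T3" if "r \<le> j" "j < n" for j
  proof -
    have jl: "j - r < length l3" using that lenps unfolding ps_def r_def by simp
    have "ps ! j = l3 ! (j - r)" using that jl unfolding ps_def r_def by (simp add: nth_append)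
    moreover note jl
    ultimately show ?thesis using l3(1) nth_mem by metis
  qed
  have psS: "ps ! j \<in> S" if "j < n" for j using ps(1) lenps that nth_mem by metis
  define \<sigma> where "\<sigma> p = sqrt ((A *\<^sub>v p) \<bullet> (A *\<^sub>v p))" for p
  define u where "u p = (1 / \<sigma> p) \<cdot>\<^sub>v (A *\<^sub>v p)" for p
  have nzA: "A *\<^sub>v p \<noteq> 0\<^sub>v m" if "p \<in> T1 \<union> T2" for p using that DA unfolding T1_def T2_def by auto
  have unit: "singular_triple m n A (\<sigma> p) (u p) p" "\<sigma> p > 0" if p: "p \<in> T1 \<union> T2" for p
  proof -
    have pS: "p \<in> S" using p unfolding T1_def T2_def by auto
    obtain \<mu> where mu: "A\<^sup>T *\<^sub>v (A *\<^sub>v p) = \<mu> \<cdot>\<^sub>v p" using SP pS by blast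
    have pp: "p \<bullet> p = 1" using S(1) pS unfolding orthonormal_def by auto
    show "singular_triple m n A (\<sigma> p) (u p) p" "\<sigma> p > 0"
      using SV_lemma[OF AB(1) pc[OF pS] pp mu nzA[OF p]] unfolding \<sigma>_def u_def by auto
  qed
  have uc: "u p \<in> carrier_vec m" and uu: "u p \<bullet> u p = 1" and Au: "A *\<^sub>v p = \<sigma> p \<cdot>\<^sub>v u p"
    if p: "p \<in> T1 \<union> T2" for p
    using unit(1)[OF p] unfolding singular_triple_def by auto
  have uorth: "u p \<bullet> u q = 0" if p: "p \<in> T1 \<union> T2" and q: "q \<in> T1 \<union> T2" and pq: "p \<noteq> q" for p q
  proof -
    have pS: "p \<in> S" and qS: "q \<in> S" using p q unfolding T1_def T2_def by auto
    obtain \<mu> where mu: "A\<^sup>T *\<^sub>v (A *\<^sub>v p) = \<mu> \<cdot>\<^sub>v p" using SP pS by blast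
    have Apc: "A *\<^sub>v p \<in> carrier_vec m" using AB pc[OF pS] by auto
    have "(A *\<^sub>v p) \<bullet> (A *\<^sub>v q) = (A\<^sup>T *\<^sub>v (A *\<^sub>v p)) \<bullet> q"
      using transpose_vec_mult_scalar[OF AB(1) pc[OF qS] Apc] by simp
    also have "\<dots> = \<mu> * (p \<bullet> q)" unfolding mu using pc[OF pS] pc[OF qS] by simp
    also have "p \<bullet> q = 0" using S(1) pS qS pq unfolding orthonormal_def by auto
    finally have "(A *\<^sub>v p) \<bullet> (A *\<^sub>v q) = 0" by simp
    thus ?thesis unfolding u_def using Apc AB pc[OF qS] by simp
  qed
  define us0 where "us0 = map u l12"
  have inj_u: "inj_on u (T1 \<union> T2)"
  proof
    fix p q assume p: "p \<in> T1 \<union> T2" and q: "q \<in> T1 \<union> T2" and e: "u p = u q"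
    show "p = q"
    proof (rule ccontr)
      assume "p \<noteq> q"
      hence "u p \<bullet> u q = 0" using uorth p q by auto
      thus False using uu[OF p] e by simp
    qed
  qed
  have us0d: "distinct us0" unfolding us0_def using l12 inj_u by (simp add: distinct_map)
  have us0o: "orthonormal m (set us0)" unfolding orthonormal_def us0_def
  proof (intro conjI ballI)
    show "set (map u l12) \<subseteq> carrier_vec m" using uc l12 by auto
    fix x y assume "x \<in> set (map u l12)" "y \<in> set (map u l12)"
    then obtain p q where pq: "p \<in> T1 \<union> T2" "q \<in> T1 \<union> T2" "x = u p" "y = u q" using l12 by auto
    show "x \<bullet> y = (if x = y then 1 else 0)"
      using pq uu uorth inj_u by (cases "p = q") (auto dest: inj_onD)
  qed
  obtain Tm where Tm: "set us0 \<subseteq> Tm" "orthonormal m Tm" "card Tm = m" using M.orthonormal_complete[OF us0o] by blast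
  have fTm: "finite Tm" using M.orthonormal_finite[OF Tm(2)] .
  obtain us1 where us1: "set us1 = Tm - set us0" "distinct us1" using finite_distinct_list[of "Tm - set us0"] fTm by auto
  define us where "us = us0 @ us1"
  have us: "set us = Tm" "distinct us" unfolding us_def using us1 us0d Tm(1) by auto
  have lenus: "length us = m" using distinct_card[OF us(2)] us(1) Tm(3) by simp
  have len0: "length us0 = r" unfolding us0_def r_def by simp
  have rm: "r \<le> m" using lenus len0 unfolding us_def by simp
  have us_u: "us ! j = u (ps ! j)" if "j < r" for j
    using that len0 ps_l12[OF that] unfolding us_def us0_def r_def by (simp add: nth_append)
  define U where "U = mat_of_cols m us"
  define V where "V = mat_of_cols n ps"
  have Uo: "orthogonal_real_mat m U" unfolding U_def using orth_list_mat[OF us(2)] us(1) Tm(2) lenus by simp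
  have Vo: "orthogonal_real_mat n V" unfolding V_def
    using orth_list_mat[OF ps(2)] ps(1) S(1) lenps by simp
  have Uc: "U \<in> carrier_mat m m" and Vc: "V \<in> carrier_mat n n" and VV: "V\<^sup>T * V = 1\<^sub>m n"
    using Uo Vo unfolding orthogonal_real_mat_def by auto
  have VVT: "V * V\<^sup>T = 1\<^sub>m n" using mat_mult_left_right_inverse[of "V\<^sup>T" n V] Vc VV by auto
  have Uent: "U $$ (i,j) = u (ps ! j) $ i" if "i < m" "j < r" for i j
  proof -
    have "us ! j \<in> carrier_vec m" using us(1) Tm(2) lenus that rm nth_mem[of j us]
      unfolding orthonormal_def by auto
    thus ?thesis unfolding U_def using that rm lenus us_u[of j] by (simp add: mat_of_cols_def)
  qed
  define d where "d j = (if j < r then \<sigma> (ps ! j) else 0)" for j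
  define Sg where "Sg = mat m n (\<lambda>(i,j). if i = j \<and> i < r then \<sigma> (ps ! i) else 0)"
  define s where "s j = (if j < kk then -1 else (1::real))" for j
  define SS where "SS = mat m m (\<lambda>(i,j). if i = j then s i else 0)"
  have Sgc: "Sg \<in> carrier_mat m n" unfolding Sg_def by simp
  have SSc: "SS \<in> carrier_mat m m" unfolding SS_def by simp
  have Sgd: "\<And>l j. l < m \<Longrightarrow> j < n \<Longrightarrow> Sg $$ (l,j) = (if l = j then d j else 0)"
    unfolding Sg_def d_def by auto
  have SSd: "\<And>l j. l < m \<Longrightarrow> j < m \<Longrightarrow> SS $$ (l,j) = (if l = j then s j else 0)"
    unfolding SS_def by auto
  have USg: "(U * Sg) $$ (i,j) = (if j < r then (\<sigma> (ps ! j) \<cdot>\<^sub>v u (ps ! j)) $ i else 0)" if ij: "i < m" "j < n" for i j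
  proof -
    have "(U * Sg) $$ (i,j) = (if j < m then U $$ (i,j) * d j else 0)"
      by (rule diag_right_entry[OF Uc Sgc Sgd ij])
    also have "\<dots> = (if j < r then (\<sigma> (ps ! j) \<cdot>\<^sub>v u (ps ! j)) $ i else 0)"
    proof (cases "j < r")
      case True
      have "ps ! j \<in> T1 \<union> T2" using True psT1 psT2 by (cases "j < kk") auto
      hence "u (ps ! j) \<in> carrier_vec m" using uc by auto
      thus ?thesis using True rm Uent[OF ij(1) True] ij unfolding d_def by simp
    qed (auto simp: d_def)
    finally show ?thesis .
  qed
  have USSSg: "(U * SS * Sg) $$ (i,j) = (if j < r then (s j * \<sigma> (ps ! j)) * u (ps ! j) $ i else 0)" if ij: "i < m" "j < n" for i j
  proof -
    have USS: "U * SS \<in> carrier_mat m m" using Uc SSc by auto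
    have e1: "(U * SS) $$ (i,l) = U $$ (i,l) * s l" if l: "l < m" for l
      using diag_right_entry[OF Uc SSc SSd ij(1) l] l by simp
    have "(U * SS * Sg) $$ (i,j) = (if j < m then (U * SS) $$ (i,j) * d j else 0)"
      by (rule diag_right_entry[OF USS Sgc Sgd ij])
    also have "\<dots> = (if j < r then (s j * \<sigma> (ps ! j)) * u (ps ! j) $ i else 0)"
    proof (cases "j < r")
      case True
      thus ?thesis using True rm e1[of j] Uent[OF ij(1) True] unfolding d_def by simp
    qed (auto simp: d_def)
    finally show ?thesis .
  qed
  have colV: "\<And>j. j < n \<Longrightarrow> col V j = ps ! j" unfolding V_def using lenps psS pc by simp
  have AV: "A * V = U * Sg"
  proof (rule mat_eq_entries[of _ m n])
    fix i j assume ij: "i < m" "j < n"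
    have "(A * V) $$ (i,j) = (A *\<^sub>v (ps ! j)) $ i" using AB Vc ij colV by simp
    also have "\<dots> = (U * Sg) $$ (i,j)"
    proof (cases "j < r")
      case True
      have "ps ! j \<in> T1 \<union> T2" using True psT1 psT2 by (cases "j < kk") auto
      thus ?thesis unfolding USg[OF ij] using True Au by simp
    next
      case False
      have "A *\<^sub>v (ps ! j) = 0\<^sub>v m" using psT3[of j] False ij unfolding T3_def by auto
      thus ?thesis unfolding USg[OF ij] using False ij by simp
    qed
    finally show "(A * V) $$ (i,j) = (U * Sg) $$ (i,j)" .
  qed (use AB Vc Uc Sgc in auto)
  have BV: "B * V = U * SS * Sg"
  proof (rule mat_eq_entries[of _ m n])
    fix i j assume ij: "i < m" "j < n"
    have pS: "ps ! j \<in> S" using psS ij by auto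
    have "(B * V) $$ (i,j) = (B *\<^sub>v (ps ! j)) $ i" using AB Vc ij colV by simp
    also have "\<dots> = (U * SS * Sg) $$ (i,j)"
    proof (cases "j < r")
      case True
      have T12: "ps ! j \<in> T1 \<union> T2" using True psT1 psT2 by (cases "j < kk") auto
      have "B *\<^sub>v (ps ! j) = (s j * \<sigma> (ps ! j)) \<cdot>\<^sub>v u (ps ! j)"
      proof (cases "j < kk")
        case True
        hence "ps ! j \<in> T1" using psT1 by auto
        hence "(A + B) *\<^sub>v (ps ! j) = 0\<^sub>v m" using SP pS unfolding T1_def by auto
        hence "B *\<^sub>v (ps ! j) = - (A *\<^sub>v (ps ! j))" using C_zero_imp(1)[OF AB pc[OF pS]] by simp
        hence "B *\<^sub>v (ps ! j) = - (\<sigma> (ps ! j) \<cdot>\<^sub>v u (ps ! j))" unfolding Au[OF T12] .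
        also have "\<dots> = (s j * \<sigma> (ps ! j)) \<cdot>\<^sub>v u (ps ! j)" unfolding s_def using True uc[OF T12]
          by (intro eq_vecI) auto
        finally show ?thesis .
      next
        case False
        hence "ps ! j \<in> T2" using psT2 \<open>j < r\<close> by auto
        hence "(A - B) *\<^sub>v (ps ! j) = 0\<^sub>v m" unfolding T2_def by auto
        hence "B *\<^sub>v (ps ! j) = A *\<^sub>v (ps ! j)" using D_zero_imp[OF AB pc[OF pS]] by simp
        thus ?thesis unfolding Au[OF T12] s_def using False by simp
      qed
      thus ?thesis unfolding USSSg[OF ij] using True ij uc[OF T12] by simp
    next
      case False
      have A0: "A *\<^sub>v (ps ! j) = 0\<^sub>v m" using psT3[of j] False ij unfolding T3_def by auto
      have "B *\<^sub>v (ps ! j) = 0\<^sub>v m"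
      proof (cases "(A + B) *\<^sub>v (ps ! j) = 0\<^sub>v m")
        case True
        thus ?thesis using C_zero_imp(1)[OF AB pc[OF pS]] A0 by simp
      next
        case False
        hence "(A - B) *\<^sub>v (ps ! j) = 0\<^sub>v m" using SP pS by auto
        thus ?thesis using D_zero_imp[OF AB pc[OF pS]] A0 by simp
      qed
      thus ?thesis unfolding USSSg[OF ij] using False ij by simp
    qed
    finally show "(B * V) $$ (i,j) = (U * SS * Sg) $$ (i,j)" .
  qed (use AB Vc Uc Sgc SSc in auto)
  have VT: "V\<^sup>T \<in> carrier_mat n n" using Vc by auto
  have Aeq: "A = U * Sg * V\<^sup>T"
  proof -
    have "A = A * (V * V\<^sup>T)" unfolding VVT using AB by simp
    also have "\<dots> = (A * V) * V\<^sup>T" using assoc_mult_mat[OF AB(1) Vc VT] by simp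
    finally show ?thesis unfolding AV .
  qed
  have Beq: "B = U * SS * Sg * V\<^sup>T"
  proof -
    have "B = B * (V * V\<^sup>T)" unfolding VVT using AB by simp
    also have "\<dots> = (B * V) * V\<^sup>T" using assoc_mult_mat[OF AB(2) Vc VT] by simp
    finally show ?thesis unfolding BV .
  qed
  have rdn: "rect_diag_nonneg m n Sg" unfolding rect_diag_nonneg_def Sg_def \<sigma>_def
    by (auto simp: real_self_dot_ge0)
  have SSdiag: "diagonal_mat SS" unfolding diagonal_mat_def SS_def by auto
  have SSpm: "\<forall>i<m. SS $$ (i,i) = 1 \<or> SS $$ (i,i) = -1" unfolding SS_def s_def by auto
  have cardS: "card {i. i < m \<and> SS $$ (i,i) = -1} = k"
  proof -
    have "{i. i < m \<and> SS $$ (i,i) = -1} = {..<kk}" unfolding SS_def s_def using kkr rm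
      by (auto split: if_splits)
    thus ?thesis using kk_eq by simp
  qed
  have pos: "\<forall>i<m. SS $$ (i,i) = -1 \<longrightarrow> i < n \<and> Sg $$ (i,i) > 0"
  proof (intro allI impI)
    fix i assume i: "i < m" "SS $$ (i,i) = -1"
    hence ik: "i < kk" unfolding SS_def s_def by (auto split: if_splits)
    hence "i < n" "i < r" using kkr rn by auto
    moreover have "ps ! i \<in> T1 \<union> T2" using psT1[OF ik] by auto
    ultimately show "i < n \<and> Sg $$ (i,i) > 0" using unit(2) i unfolding Sg_def by simp
  qed
  show ?thesis unfolding sign_change_sv_def
    by (rule exI[of _ U], rule exI[of _ V], rule exI[of _ Sg], rule exI[of _ SS])
      (use Uo Vo rdn Aeq SSc SSdiag SSpm cardS pos Beq in auto)
qed

theorem corollary3p10: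
  fixes A B :: "real mat" and m n k :: nat
  assumes "A \<in> carrier_mat m n" and "B \<in> carrier_mat m n"
    and "zero_one_mat A" and "zero_one_mat B" and "A \<noteq> B"
    and "k = vec_space.rank m (A - B)"
  defines "P1 \<equiv> gram_mates A B \<and> (A + B) * (A - B)\<^sup>T = 0\<^sub>m m m"
    and "P2 \<equiv> gram_mates A B \<and> (A - B)\<^sup>T * (A + B) = 0\<^sub>m n n"
    and "P3 \<equiv> sign_change_sv m n k A B"
    and "P4 \<equiv> (\<exists>vs. length vs = k \<and>
               (\<forall>v\<in>set vs. \<exists>\<sigma>>0. right_singular_vector m n A \<sigma> v) \<and>
               vec_space.is_basis_list n vs (vec_space.row_space n (A - B)) \<and>
               (\<forall>v\<in>set vs. (A + B) *\<^sub>v v = 0\<^sub>v m))"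
    and "P5 \<equiv> (\<exists>us. length us = k \<and>
               (\<forall>u\<in>set us. \<exists>\<sigma>>0. left_singular_vector m n A \<sigma> u) \<and>
               vec_space.is_basis_list m us (vec_space.col_space m (A - B)) \<and>
               (\<forall>u\<in>set us. (A + B)\<^sup>T *\<^sub>v u = 0\<^sub>v n))"
    and "P6 \<equiv> gram_mates A B \<and> (A * (A - B)\<^sup>T)\<^sup>T = A * (A - B)\<^sup>T"
    and "P7 \<equiv> gram_mates A B \<and> (A\<^sup>T * (A - B))\<^sup>T = A\<^sup>T * (A - B)"
  shows "(P1 \<longleftrightarrow> P2) \<and> (P2 \<longleftrightarrow> P3) \<and> (P3 \<longleftrightarrow> P4) \<and> (P4 \<longleftrightarrow> P5)
         \<and> (P5 \<longleftrightarrow> P6) \<and> (P6 \<longleftrightarrow> P7)"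
proof -
  have AT: "A\<^sup>T \<in> carrier_mat n m" and BT: "B\<^sup>T \<in> carrier_mat n m" using assms(1,2) by auto
  have AB: "A \<in> carrier_mat m n" "B \<in> carrier_mat m n" using assms(1,2) .
  have zoT: "zero_one_mat A\<^sup>T" "zero_one_mat B\<^sup>T" using assms(3,4) unfolding zero_one_mat_def by auto
  have neqT: "A\<^sup>T \<noteq> B\<^sup>T" using assms(5) by simp
  have DTT: "(A\<^sup>T - B\<^sup>T)\<^sup>T = A - B" using transpose_minus[OF AT BT] by simp
  have CT: "A\<^sup>T + B\<^sup>T = (A + B)\<^sup>T" using transpose_add[OF AB] by simp
  have DT: "A\<^sup>T - B\<^sup>T = (A - B)\<^sup>T" using transpose_minus[OF AB] by simp
  have key: "A * B\<^sup>T = B * A\<^sup>T \<longleftrightarrow> A\<^sup>T * B = B\<^sup>T * A" if g: "gram_mates A B"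
  proof -
    have G1: "A * A\<^sup>T = B * B\<^sup>T" and G2: "A\<^sup>T * A = B\<^sup>T * B" using g unfolding gram_mates_def by auto
    show ?thesis
    proof
      assume "A * B\<^sup>T = B * A\<^sup>T"
      thus "A\<^sup>T * B = B\<^sup>T * A" using key_sym[OF AB G1 G2] by simp
    next
      assume h: "A\<^sup>T * B = B\<^sup>T * A"
      have "A\<^sup>T\<^sup>T * B\<^sup>T = B\<^sup>T\<^sup>T * A\<^sup>T"
        by (rule key_sym[OF AT BT]) (use G1 G2 h in auto)
      thus "A * B\<^sup>T = B * A\<^sup>T" by simp
    qed
  qed
  have e1: "P1 \<longleftrightarrow> gram_mates A B \<and> A * B\<^sup>T = B * A\<^sup>T"
    unfolding P1_def using P1_alt[OF AB] unfolding gram_mates_def by blast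
  have e2: "P2 \<longleftrightarrow> gram_mates A B \<and> A\<^sup>T * B = B\<^sup>T * A"
    unfolding P2_def using P2_alt[OF AB] unfolding gram_mates_def by blast
  have e6: "P6 \<longleftrightarrow> gram_mates A B \<and> A * B\<^sup>T = B * A\<^sup>T"
    unfolding P6_def using P6_alt[OF AB] by blast
  have e7: "P7 \<longleftrightarrow> gram_mates A B \<and> A\<^sup>T * B = B\<^sup>T * A"
    unfolding P7_def using P6_alt[OF AT BT] unfolding DTT by simp
  have i12: "P1 \<longleftrightarrow> P2" using e1 e2 key by blast
  have i13: "P1 \<longleftrightarrow> P3"
  proof
    assume p: P1
    hence g: "gram_mates A B" and CDT: "(A + B) * (A - B)\<^sup>T = 0\<^sub>m m m" unfolding P1_def by auto
    have G2: "A\<^sup>T * A = B\<^sup>T * B" using g unfolding gram_mates_def by auto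
    show P3 unfolding P3_def by (rule P1_imp_P3[OF AB G2 CDT assms(6)])
  next
    assume P3
    thus P1 unfolding P1_def P3_def using P3_imp_P1[OF AB assms(3,4,5)] by blast
  qed
  have i14: "P1 \<longleftrightarrow> P4"
  proof
    assume p: P1
    hence g: "gram_mates A B" and CDT: "(A + B) * (A - B)\<^sup>T = 0\<^sub>m m m" unfolding P1_def by auto
    have G2: "A\<^sup>T * A = B\<^sup>T * B" using g unfolding gram_mates_def by auto
    show P4 unfolding P4_def using P1_imp_P4[OF AB G2 CDT] assms(6) by metis
  next
    assume P4
    then obtain vs where "\<forall>v\<in>set vs. \<exists>\<sigma>>0. right_singular_vector m n A \<sigma> v"
      "vec_space.is_basis_list n vs (vec_space.row_space n (A - B))" "\<forall>v\<in>set vs. (A + B) *\<^sub>v v = 0\<^sub>v m"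
      unfolding P4_def by blast
    thus P1 unfolding P1_def using P4_imp_P1[OF AB assms(3,4,5)] by blast
  qed
  have lr: "left_singular_vector m n A \<sigma> u \<longleftrightarrow> right_singular_vector n m A\<^sup>T \<sigma> u" for \<sigma> u
    unfolding left_singular_vector_def right_singular_vector_def singular_triple_def by auto
  have csp: "vec_space.col_space m (A - B) = vec_space.row_space m (A\<^sup>T - B\<^sup>T)"
    unfolding DT by (rule vec_space.col_space_eq_row_space_transpose)
  define P1T where "P1T = (gram_mates A\<^sup>T B\<^sup>T \<and> (A\<^sup>T + B\<^sup>T) * (A\<^sup>T - B\<^sup>T)\<^sup>T = 0\<^sub>m n n)"
  have iT: "P1T \<longleftrightarrow> P2"
  proof -
    have X: "(A - B)\<^sup>T * (A + B) \<in> carrier_mat n n" using AB by auto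
    have "((A - B)\<^sup>T * (A + B))\<^sup>T = (A + B)\<^sup>T * (A - B)\<^sup>T\<^sup>T"
      by (rule transpose_mult) (use AB in auto)
    hence tr: "(A\<^sup>T + B\<^sup>T) * (A\<^sup>T - B\<^sup>T)\<^sup>T = ((A - B)\<^sup>T * (A + B))\<^sup>T" unfolding DTT CT by simp
    have "((A - B)\<^sup>T * (A + B))\<^sup>T = 0\<^sub>m n n \<longleftrightarrow> (A - B)\<^sup>T * (A + B) = 0\<^sub>m n n"
    proof
      assume "((A - B)\<^sup>T * (A + B))\<^sup>T = 0\<^sub>m n n"
      hence "((A - B)\<^sup>T * (A + B))\<^sup>T\<^sup>T = (0\<^sub>m n n)\<^sup>T" by simp
      thus "(A - B)\<^sup>T * (A + B) = 0\<^sub>m n n" by simp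
    qed simp
    thus ?thesis unfolding P1T_def P2_def tr gram_mates_transpose by simp
  qed
  have i25: "P2 \<longleftrightarrow> P5"
  proof
    assume P2
    hence p: P1T using iT by simp
    hence g: "gram_mates A\<^sup>T B\<^sup>T" and CDT: "(A\<^sup>T + B\<^sup>T) * (A\<^sup>T - B\<^sup>T)\<^sup>T = 0\<^sub>m n n" unfolding P1T_def by auto
    have G2: "A\<^sup>T\<^sup>T * A\<^sup>T = B\<^sup>T\<^sup>T * B\<^sup>T" using g unfolding gram_mates_def by auto
    obtain us where us: "length us = vec_space.rank m (A\<^sup>T - B\<^sup>T)\<^sup>T"
      "\<forall>v\<in>set us. \<exists>\<sigma>>0. right_singular_vector n m A\<^sup>T \<sigma> v"
      "vec_space.is_basis_list m us (vec_space.row_space m (A\<^sup>T - B\<^sup>T))"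
      "\<forall>v\<in>set us. (A\<^sup>T + B\<^sup>T) *\<^sub>v v = 0\<^sub>v n"
      using P1_imp_P4[OF AT BT G2 CDT] by blast
    show P5 unfolding P5_def
      by (rule exI[of _ us]) (use us DTT CT csp lr assms(6) in auto)
  next
    assume P5
    then obtain us where us: "\<forall>u\<in>set us. \<exists>\<sigma>>0. left_singular_vector m n A \<sigma> u"
      "vec_space.is_basis_list m us (vec_space.col_space m (A - B))" "\<forall>u\<in>set us. (A + B)\<^sup>T *\<^sub>v u = 0\<^sub>v n"
      unfolding P5_def by blast
    have "P1T" unfolding P1T_def
      by (rule P4_imp_P1[OF AT BT zoT neqT]) (use us lr csp CT in auto)
    thus P2 using iT by simp
  qed
  show ?thesis using i12 i13 i14 i25 e1 e6 e2 e7 by blast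
qed

end
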